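(* Consider the setting in the context with $P_i=\tau_iI_n$, $Q_i=\zeta_iI_n$, $\rho>0$, $\gamma\in(0,2)$, and assume (P1) admits a KKT point. If for every $i\in\mathcal{V}$ $$\tau_i>\rho\Big(\frac{N}{2-\gamma}-1\Big)d_i,\qquad \zeta_i>\frac{C_i}{m}(C_i+m),$$ then the sequence $\bm{u}^k=(\check{\bm{W}}^k,\hat{\bm{W}}^k,\lambda^k)$ generated by the algorithm converges to an optimal primal–dual (KKT) solution $\bm{u}^*$ of (P1).
   Context: Let $\mathcal{G}=(\mathcal{V},\mathcal{E})$ be a connected undirected graph with $\mathcal{V}=\{1,\dots,N\}$, $N\ge 2$, and let $d_i$ be the degree of $i$. Variables are $\check{\bm{w}}_i,\hat{\bm{w}}_i\in\mathbb{R}^n$; write $\check{\bm{W}}=(\check{\bm{w}}_1,\dots,\check{\bm{w}}_N)$, $\hat{\bm{W}}$ likewise, $\bm{z}_i=(\check{\bm{w}}_i,\hat{\bm{w}}_i)$, $\bm{Z}=(\check{\bm{W}},\hat{\bm{W}})$. The matrix $\bm{A}\in\mathbb{R}^{|\mathcal{E}|n\times Nn}$ has one block row per edge $\{i,j\}$ ($i<j$) with $I_n$ in block column $i$, $-I_n$ in block column $j$, zeros elsewhere; $A_i$ is its $i$-th block column. Each $f_i:\mathbb{R}^n\times\mathbb{R}^n\to\mathbb{R}$ is differentiable, jointly convex, with $\nabla f_i$ Lipschitz with constant $C_i$. Let $\mu_1\ge0$, $\mu_2>0$, $F_i(\bm{z}_i)=f_i(\check{\bm{w}}_i,\hat{\bm{w}}_i)+\frac{\mu_1}{2}\|\check{\bm{w}}_i\|^2+\frac{\mu_2}{2}\|\hat{\bm{w}}_i\|^2$,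 $\bm{F}(\bm{Z})=\sum_iF_i(\bm{z}_i)$, and $m$ a constant with $0<m\le\mu_2$. Problem (P1): minimize $\bm{F}(\bm{Z})$ s.t. $\bm{A}\check{\bm{W}}=0$; a KKT point is $(\check{\bm{W}}^*,\hat{\bm{W}}^*,\lambda^* )$ with $\bm{A}\check{\bm{W}}^*=0$, $A_i^T\lambda^*=\nabla_{\check{\bm{w}}_i}F_i(\bm{z}_i^* )$, $\nabla_{\hat{\bm{w}}_i}F_i(\bm{z}_i^* )=0$. Algorithm: with $\mathcal{L}_\rho=\bm{F}(\bm{Z})-\lambda^T\bm{A}\check{\bm{W}}+\frac\rho2\|\bm{A}\check{\bm{W}}\|^2$, from arbitrary $\check{\bm{W}}^0,\hat{\bm{W}}^0,\lambda^0$, for $k=0,1,\dots$: (i) for all $i$ in parallel $\check{\bm{w}}_i^{k+1}=\arg\min_{\check{\bm{w}}_i}\mathcal{L}_\rho(\check{\bm{w}}_i,\check{\bm{W}}^k_{-i},\hat{\bm{W}}^k,\lambda^k)+\frac12\|\check{\bm{w}}_i-\check{\bm{w}}_i^k\|^2_{P_i}$; (ii) $\lambda^{k+1}=\lambda^k-\gamma\rho\bm{A}\check{\bm{W}}^{k+1}$; (iii) for all $i$ in parallel $\hat{\bm{w}}_i^{k+1}=\arg\min_{\hat{\bm{w}}_i}F_i(\check{\bm{w}}_i^{k+1},\hat{\bm{w}}_i)+\frac12\|\hat{\bm{w}}_i-\hat{\bm{w}}_i^k\|^2_{Q_i}$. Here $\|x\|^2_S=x^TSx$. *)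

theory Defs
  imports "HOL-Analysis.Analysis"
begin

text \<open>Vertices are 0..N-1; edges are pairs (i,j) with i<j<N. Block vectors are functions
  nat => real^'n (only indices below N matter); dual variables are functions on edges.\<close>

definition valid_edges :: "nat \<Rightarrow> (nat \<times> nat) set \<Rightarrow> bool" where
  "valid_edges N E \<longleftrightarrow> E \<subseteq> {(i,j). i < j \<and> j < N}"

definition graph_connected :: "nat \<Rightarrow> (nat \<times> nat) set \<Rightarrow> bool" where
  "graph_connected N E \<longleftrightarrow> (\<forall>i<N. \<forall>j<N. (i,j) \<in> (E \<union> E\<inverse>)\<^sup>*)"

definition degree :: "(nat \<times> nat) set \<Rightarrow> nat \<Rightarrow> nat" where
  "degree E i = card {e\<in>E. fst e = i \<or> snd e = i}"

definition edge_diff :: "(nat \<Rightarrow> 'a::ab_group_add) \<Rightarrow> nat \<times> nat \<Rightarrow> 'a" where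
  "edge_diff W e = W (fst e) - W (snd e)"

definition AT :: "(nat \<times> nat) set \<Rightarrow> (nat \<times> nat \<Rightarrow> 'a::ab_group_add) \<Rightarrow> nat \<Rightarrow> 'a" where
  "AT E lam i = (\<Sum>e\<in>{e\<in>E. fst e = i}. lam e) - (\<Sum>e\<in>{e\<in>E. snd e = i}. lam e)"

definition Fi :: "(nat \<Rightarrow> ((real^'n) \<times> (real^'n)) \<Rightarrow> real) \<Rightarrow> real \<Rightarrow> real \<Rightarrow> nat
    \<Rightarrow> real^'n \<Rightarrow> real^'n \<Rightarrow> real" where
  "Fi f mu1 mu2 i wc wh = f i (wc, wh) + mu1 / 2 * (norm wc)\<^sup>2 + mu2 / 2 * (norm wh)\<^sup>2"

definition FF :: "(nat \<Rightarrow> ((real^'n) \<times> (real^'n)) \<Rightarrow> real) \<Rightarrow> real \<Rightarrow> real \<Rightarrow> nat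
    \<Rightarrow> (nat \<Rightarrow> real^'n) \<Rightarrow> (nat \<Rightarrow> real^'n) \<Rightarrow> real" where
  "FF f mu1 mu2 N Wc Wh = (\<Sum>i<N. Fi f mu1 mu2 i (Wc i) (Wh i))"

definition lagr :: "(nat \<Rightarrow> ((real^'n) \<times> (real^'n)) \<Rightarrow> real) \<Rightarrow> real \<Rightarrow> real \<Rightarrow> nat
    \<Rightarrow> (nat \<times> nat) set \<Rightarrow> real \<Rightarrow> (nat \<Rightarrow> real^'n) \<Rightarrow> (nat \<Rightarrow> real^'n)
    \<Rightarrow> (nat \<times> nat \<Rightarrow> real^'n) \<Rightarrow> real" where
  "lagr f mu1 mu2 N E rho Wc Wh lam =
     FF f mu1 mu2 N Wc Wh - (\<Sum>e\<in>E. lam e \<bullet> edge_diff Wc e)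
     + rho / 2 * (\<Sum>e\<in>E. (norm (edge_diff Wc e))\<^sup>2)"

text \<open>KKT point of (P1); gc i, gh i are the partial gradients of f i, so that
  nabla_{wc} F_i = gc i z + mu1 wc and nabla_{wh} F_i = gh i z + mu2 wh.\<close>
definition is_KKT :: "(nat \<Rightarrow> ((real^'n) \<times> (real^'n)) \<Rightarrow> real^'n) \<Rightarrow> (nat \<Rightarrow> ((real^'n) \<times> (real^'n)) \<Rightarrow> real^'n)
    \<Rightarrow> real \<Rightarrow> real \<Rightarrow> nat \<Rightarrow> (nat \<times> nat) set
    \<Rightarrow> (nat \<Rightarrow> real^'n) \<Rightarrow> (nat \<Rightarrow> real^'n) \<Rightarrow> (nat \<times> nat \<Rightarrow> real^'n) \<Rightarrow> bool" where
  "is_KKT gc gh mu1 mu2 N E Wc Wh lam \<longleftrightarrow>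
     (\<forall>e\<in>E. edge_diff Wc e = 0) \<and>
     (\<forall>i<N. AT E lam i = gc i (Wc i, Wh i) + mu1 *\<^sub>R Wc i) \<and>
     (\<forall>i<N. gh i (Wc i, Wh i) + mu2 *\<^sub>R Wh i = 0)"

end

theory Submission
  imports Defs "HOL-Analysis.Analysis"
begin


lemma grad_zero_at_min:
  fixes phi :: "'a::real_inner \<Rightarrow> real"
  assumes "(phi has_derivative (\<lambda>v. G \<bullet> v)) (at x)" "\<And>w. phi x \<le> phi w"
  shows "G = 0"
proof -
  have "(\<lambda>v. G \<bullet> v) = (\<lambda>h. 0)"
    using has_derivative_local_min[OF assms(1)] assms(2) by (simp add: always_eventually)
  then have "G \<bullet> G = 0" by metis
  then show ?thesis by simp
qed

lemma convex_grad_ineq: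
  fixes f :: "'a::real_inner \<Rightarrow> real"
  assumes cv: "convex_on UNIV f" and d: "(f has_derivative (\<lambda>h. g \<bullet> h)) (at q)"
  shows "f s \<ge> f q + g \<bullet> (s - q)"
proof -
  define h where "h t = f (q + t *\<^sub>R (s - q))" for t :: real
  have hc: "convex_on UNIV h"
  proof (rule convex_onI)
    fix t :: real and x y :: real
    assume "0 < t" "t < 1"
    have "q + ((1 - t) *\<^sub>R x + t *\<^sub>R y) *\<^sub>R (s - q)
        = (1 - t) *\<^sub>R (q + x *\<^sub>R (s - q)) + t *\<^sub>R (q + y *\<^sub>R (s - q))"
      by (simp add: algebra_simps)
    then show "h ((1 - t) *\<^sub>R x + t *\<^sub>R y) \<le> (1 - t) * h x + t * h y"
      unfolding h_def using convex_onD[OF cv, of t "q + x *\<^sub>R (s - q)" "q + y *\<^sub>R (s - q)"] \<open>0<t\<close> \<open>t<1\<close>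
      by simp
  qed simp
  have "((\<lambda>t. q + t *\<^sub>R (s - q)) has_derivative (\<lambda>t. t *\<^sub>R (s - q))) (at 0)"
    by (auto intro!: derivative_eq_intros)
  moreover have "(f has_derivative (\<lambda>h. g \<bullet> h)) (at (q + 0 *\<^sub>R (s - q)))" using d by simp
  ultimately have "(h has_derivative (\<lambda>t. g \<bullet> (t *\<^sub>R (s - q)))) (at 0)"
    unfolding h_def by (rule has_derivative_compose)
  then have "(h has_field_derivative (g \<bullet> (s - q))) (at 0)"
    by (simp add: has_field_derivative_def mult.commute[of _ "_ \<bullet> _"])
  then have "h 1 - h 0 \<ge> (g \<bullet> (s - q)) * (1 - 0)"
    by (intro convex_on_imp_above_tangent[OF hc]) auto
  then show ?thesis by (simp add: h_def)
qed

lemma descent_ineq: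
  fixes f :: "'a::real_inner \<Rightarrow> real"
  assumes d: "\<And>z. (f has_derivative (\<lambda>h. G z \<bullet> h)) (at z)"
    and L: "\<And>z z'. norm (G z - G z') \<le> C * norm (z - z')"
  shows "f p \<le> f q + G q \<bullet> (p - q) + C / 2 * (norm (p - q))\<^sup>2"
proof -
  define dd where "dd = p - q"
  define h where "h = (\<lambda>t::real. f (q + t *\<^sub>R dd) - t * (G q \<bullet> dd) - C / 2 * t\<^sup>2 * (norm dd)\<^sup>2)"
  have "h 0 \<ge> h 1"
  proof (rule DERIV_nonpos_imp_nonincreasing[of 0 1 h])
    fix t :: real assume t: "0 \<le> t" "t \<le> 1"
    have "((\<lambda>t. q + t *\<^sub>R dd) has_derivative (\<lambda>s. s *\<^sub>R dd)) (at t)"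
      by (auto intro!: derivative_eq_intros)
    then have "((\<lambda>t. f (q + t *\<^sub>R dd)) has_derivative (\<lambda>s. G (q + t *\<^sub>R dd) \<bullet> (s *\<^sub>R dd))) (at t)"
      using d by (rule has_derivative_compose)
    then have d1: "((\<lambda>t. f (q + t *\<^sub>R dd)) has_field_derivative (G (q + t *\<^sub>R dd) \<bullet> dd)) (at t)"
      by (simp add: has_field_derivative_def mult.commute[of _ "_ \<bullet> _"])
    have "(h has_field_derivative (G (q + t *\<^sub>R dd) \<bullet> dd - G q \<bullet> dd - C * t * (norm dd)\<^sup>2)) (at t)"
      unfolding h_def
      apply (rule DERIV_diff[OF DERIV_diff[OF d1], THEN DERIV_cong])
      apply (auto intro!: derivative_eq_intros simp: power2_eq_square)
      done
    moreover have "G (q + t *\<^sub>R dd) \<bullet> dd - G q \<bullet> dd - C * t * (norm dd)\<^sup>2 \<le> 0"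
    proof -
      have "G (q + t *\<^sub>R dd) \<bullet> dd - G q \<bullet> dd = (G (q + t *\<^sub>R dd) - G q) \<bullet> dd"
        by (simp add: inner_diff_left)
      also have "\<dots> \<le> norm (G (q + t *\<^sub>R dd) - G q) * norm dd"
        by (rule Cauchy_Schwarz_ineq2[THEN order_trans[OF abs_ge_self]])
      also have "\<dots> \<le> C * norm (t *\<^sub>R dd) * norm dd"
        using L[of "q + t *\<^sub>R dd" q] by (simp add: mult_right_mono)
      also have "\<dots> = C * t * (norm dd)\<^sup>2" using t by (simp add: power2_eq_square)
      finally show ?thesis by simp
    qed
    ultimately show "\<exists>y. DERIV h t :> y \<and> y \<le> 0" by blast
  qed simp
  then show ?thesis by (simp add: h_def dd_def)
qed

lemma young_ab:
  fixes a b C m :: real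
  assumes "m > 0"
  shows "C * a * b \<le> m * b\<^sup>2 + C\<^sup>2 / (4 * m) * a\<^sup>2"
proof -
  have "0 \<le> (2 * m * b - C * a)\<^sup>2" by simp
  then have "4 * m * (C * a * b) \<le> 4 * m * (m * b\<^sup>2 + C\<^sup>2 / (4 * m) * a\<^sup>2)"
    using assms by (simp add: power2_eq_square algebra_simps)
  then show ?thesis using assms by simp
qed

lemma mono3:
  fixes f :: "('a::real_inner \<times> 'a) \<Rightarrow> real" and G :: "'a \<times> 'a \<Rightarrow> 'a \<times> 'a"
  assumes cv: "convex_on UNIV f" and d: "\<And>z. (f has_derivative (\<lambda>h. G z \<bullet> h)) (at z)"
    and L: "\<And>z z'. norm (G z - G z') \<le> C * norm (z - z')"
    and m: "m > 0" "m \<le> mu2"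
  shows "(fst (G (x, y0)) - fst (G (xs, ys))) \<bullet> (x - xs) + (snd (G (x, y)) - snd (G (xs, ys))) \<bullet> (y - ys)
      + mu2 * (norm (y - ys))\<^sup>2 \<ge> - (C / 2 + C\<^sup>2 / (4 * m)) * (norm (y0 - y))\<^sup>2"
proof -
  define p q s where "p = (x, y)" and "q = (x, y0)" and "s = (xs, ys)"
  have h1: "f p \<le> f q + G q \<bullet> (p - q) + C / 2 * (norm (p - q))\<^sup>2"
    by (rule descent_ineq[OF d L])
  have h2: "f s \<ge> f q + G q \<bullet> (s - q)" by (rule convex_grad_ineq[OF cv d])
  have h3: "f p \<ge> f s + G s \<bullet> (p - s)" by (rule convex_grad_ineq[OF cv d])
  have npq: "norm (p - q) = norm (y0 - y)"
    by (simp add: p_def q_def norm_Pair norm_minus_commute)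
  have "G q \<bullet> (p - s) = G q \<bullet> (p - q) - G q \<bullet> (s - q)"
    by (simp add: inner_diff_right)
  then have h4: "(G q - G s) \<bullet> (p - s) \<ge> - C / 2 * (norm (y0 - y))\<^sup>2"
    using h1 h2 h3 npq by (simp add: inner_diff_left)
  have e4: "(G q - G s) \<bullet> (p - s) = (fst (G q) - fst (G s)) \<bullet> (x - xs) + (snd (G q) - snd (G s)) \<bullet> (y - ys)"
    by (cases "G q", cases "G s") (simp add: p_def s_def)
  have "(snd (G p) - snd (G q)) \<bullet> (y - ys) \<ge> - (norm (snd (G p) - snd (G q)) * norm (y - ys))"
    using Cauchy_Schwarz_ineq2[of "snd (G p) - snd (G q)" "y - ys"] by (simp add: abs_le_iff)
  moreover have "norm (snd (G p) - snd (G q)) \<le> C * norm (y0 - y)"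
  proof -
    have "norm (snd (G p) - snd (G q)) = norm (snd (G p - G q))" by simp
    also have "\<dots> \<le> norm (G p - G q)" by (cases "G p - G q") (simp add: norm_snd_le)
    also have "\<dots> \<le> C * norm (y0 - y)" using L[of p q] npq by simp
    finally show ?thesis .
  qed
  ultimately have h5: "(snd (G p) - snd (G q)) \<bullet> (y - ys) \<ge> - (C * norm (y0 - y) * norm (y - ys))"
    by (smt (verit) mult_right_mono norm_ge_zero)
  have h6: "C * norm (y0 - y) * norm (y - ys) \<le> m * (norm (y - ys))\<^sup>2 + C\<^sup>2 / (4 * m) * (norm (y0 - y))\<^sup>2"
    by (rule young_ab[OF m(1)])
  have h7: "mu2 * (norm (y - ys))\<^sup>2 \<ge> m * (norm (y - ys))\<^sup>2"
    using m by (simp add: mult_right_mono)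
  have "(snd (G p) - snd (G s)) \<bullet> (y - ys) = (snd (G p) - snd (G q)) \<bullet> (y - ys) + (snd (G q) - snd (G s)) \<bullet> (y - ys)"
    by (simp add: inner_diff_left)
  then show ?thesis using h4 e4 h5 h6 h7 unfolding p_def q_def s_def
    by (simp add: algebra_simps)
qed



lemma valid_finite: "valid_edges N E \<Longrightarrow> finite E"
  unfolding valid_edges_def
  by (rule finite_subset[of _ "{..<N} \<times> {..<N}"]) auto

lemma valid_lt: "valid_edges N E \<Longrightarrow> e \<in> E \<Longrightarrow> fst e < snd e \<and> snd e < N"
  unfolding valid_edges_def by auto

lemma group_fst:
  assumes "valid_edges N E"
  shows "(\<Sum>i<N. \<Sum>e\<in>{e\<in>E. fst e = i}. h e) = (\<Sum>e\<in>E. h e)"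
  using sum.group[of E "{..<N}" fst h] valid_finite[OF assms] valid_lt[OF assms]
  by (force simp: image_subset_iff)

lemma group_snd:
  assumes "valid_edges N E"
  shows "(\<Sum>i<N. \<Sum>e\<in>{e\<in>E. snd e = i}. h e) = (\<Sum>e\<in>E. h e)"
  using sum.group[of E "{..<N}" snd h] valid_finite[OF assms] valid_lt[OF assms]
  by (force simp: image_subset_iff)

lemma adjoint:
  fixes lam v :: "_ \<Rightarrow> 'a::real_inner"
  assumes ve: "valid_edges N E"
  shows "(\<Sum>i<N. AT E lam i \<bullet> v i) = (\<Sum>e\<in>E. lam e \<bullet> edge_diff v e)"
proof -
  have "(\<Sum>i<N. AT E lam i \<bullet> v i) =
     (\<Sum>i<N. \<Sum>e\<in>{e\<in>E. fst e = i}. lam e \<bullet> v (fst e)) - (\<Sum>i<N. \<Sum>e\<in>{e\<in>E. snd e = i}. lam e \<bullet> v (snd e))"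
    unfolding AT_def by (simp add: inner_diff_left inner_sum_left sum_subtractf)
  also have "\<dots> = (\<Sum>e\<in>E. lam e \<bullet> v (fst e)) - (\<Sum>e\<in>E. lam e \<bullet> v (snd e))"
    by (simp only: group_fst[OF ve] group_snd[OF ve])
  also have "\<dots> = (\<Sum>e\<in>E. lam e \<bullet> edge_diff v e)"
    by (simp add: edge_diff_def inner_diff_right sum_subtractf)
  finally show ?thesis .
qed

lemma AT_add: "AT E (\<lambda>e. a e + b e) i = AT E a i + AT E b i"
  unfolding AT_def by (simp add: sum.distrib algebra_simps)

lemma AT_diff: "AT E (\<lambda>e. a e - b e) i = AT E a i - AT E b i"
  unfolding AT_def by (simp add: sum_subtractf algebra_simps)

lemma AT_scale: "AT E (\<lambda>e. c *\<^sub>R (a e :: 'a::real_vector)) i = c *\<^sub>R AT E a i"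
  unfolding AT_def by (simp add: scaleR_sum_right[symmetric] scaleR_right_diff_distrib)

lemma AT_zero: "(\<And>e. e \<in> E \<Longrightarrow> a e = 0) \<Longrightarrow> AT E a i = 0"
  unfolding AT_def by simp

lemma edge_diff_add: "edge_diff (\<lambda>j. a j + b j) e = edge_diff a e + edge_diff b e"
  unfolding edge_diff_def by simp

lemma edge_diff_diff: "edge_diff (\<lambda>j. a j - b j) e = edge_diff a e - edge_diff b e"
  unfolding edge_diff_def by simp

lemma degree_split:
  assumes ve: "valid_edges N E"
  shows "degree E i = card {e\<in>E. fst e = i} + card {e\<in>E. snd e = i}"
proof -
  have "{e\<in>E. fst e = i \<or> snd e = i} = {e\<in>E. fst e = i} \<union> {e\<in>E. snd e = i}" by auto
  moreover have "{e\<in>E. fst e = i} \<inter> {e\<in>E. snd e = i} = {}" using valid_lt[OF ve] by fastforce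
  ultimately show ?thesis unfolding degree_def
    using valid_finite[OF ve] by (simp add: card_Un_disjoint)
qed

lemma AT_delta:
  fixes v :: "'a::real_vector"
  assumes ve: "valid_edges N E"
  shows "AT E (edge_diff ((\<lambda>_. 0)(i := v))) i = real (degree E i) *\<^sub>R v"
proof -
  have 1: "(\<Sum>e\<in>{e\<in>E. fst e = i}. edge_diff ((\<lambda>_. 0)(i := v)) e) = (\<Sum>e\<in>{e\<in>E. fst e = i}. v)"
  proof (rule sum.cong)
    fix e assume "e \<in> {e\<in>E. fst e = i}"
    then have "fst e = i" "snd e \<noteq> i" using valid_lt[OF ve, of e] by auto
    then show "edge_diff ((\<lambda>_. 0)(i := v)) e = v" by (simp add: edge_diff_def)
  qed simp
  have 2: "(\<Sum>e\<in>{e\<in>E. snd e = i}. edge_diff ((\<lambda>_. 0)(i := v)) e) = (\<Sum>e\<in>{e\<in>E. snd e = i}. - v)"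
  proof (rule sum.cong)
    fix e assume "e \<in> {e\<in>E. snd e = i}"
    then have "snd e = i" "fst e \<noteq> i" using valid_lt[OF ve, of e] by auto
    then show "edge_diff ((\<lambda>_. 0)(i := v)) e = - v" by (simp add: edge_diff_def)
  qed simp
  show ?thesis unfolding AT_def 1 2 degree_split[OF ve]
    by (simp add: scaleR_add_left sum_negf sum_constant_scaleR)
qed

lemma degree_sum:
  fixes phi :: "nat \<Rightarrow> real"
  assumes ve: "valid_edges N E"
  shows "(\<Sum>i<N. real (degree E i) * phi i) = (\<Sum>e\<in>E. phi (fst e) + phi (snd e))"
proof -
  have "(\<Sum>i<N. real (degree E i) * phi i) =
     (\<Sum>i<N. \<Sum>e\<in>{e\<in>E. fst e = i}. phi (fst e)) + (\<Sum>i<N. \<Sum>e\<in>{e\<in>E. snd e = i}. phi (snd e))"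
    unfolding degree_split[OF ve] by (simp add: algebra_simps sum.distrib)
  also have "\<dots> = (\<Sum>e\<in>E. phi (fst e) + phi (snd e))"
    by (simp only: group_fst[OF ve] group_snd[OF ve] sum.distrib)
  finally show ?thesis .
qed

lemma edge_norm_le:
  fixes v :: "nat \<Rightarrow> 'a::real_inner"
  shows "(norm (edge_diff v e))\<^sup>2 \<le> 2 * ((norm (v (fst e)))\<^sup>2 + (norm (v (snd e)))\<^sup>2)"
proof -
  have "(norm (v (fst e) - v (snd e)))\<^sup>2 \<le> (norm (v (fst e)) + norm (v (snd e)))\<^sup>2"
    by (simp add: norm_triangle_ineq4 power_mono)
  also have "\<dots> \<le> 2 * ((norm (v (fst e)))\<^sup>2 + (norm (v (snd e)))\<^sup>2)"
    by (smt (verit) sum_squares_bound power2_sum)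
  finally show ?thesis by (simp add: edge_diff_def)
qed

lemma edge_sum_le:
  fixes v :: "nat \<Rightarrow> 'a::real_inner"
  assumes ve: "valid_edges N E"
  shows "(\<Sum>e\<in>E. (norm (edge_diff v e))\<^sup>2) \<le> 2 * (\<Sum>i<N. real (degree E i) * (norm (v i))\<^sup>2)"
  unfolding degree_sum[OF ve] sum_distrib_left
  by (rule sum_mono) (use edge_norm_le in \<open>simp add: algebra_simps\<close>)



lemma ed_upd_deriv:
  "((\<lambda>w. edge_diff (X(i:=w)) e) has_derivative (\<lambda>v. edge_diff ((\<lambda>_. 0)(i:=v)) e)) (at w)"
  by (cases "fst e = i"; cases "snd e = i") (auto simp: edge_diff_def intro!: derivative_eq_intros)

lemma adjoint_delta:
  fixes lam :: "_ \<Rightarrow> 'a::real_inner"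
  assumes ve: "valid_edges N E" and i: "i < N"
  shows "(\<Sum>e\<in>E. lam e \<bullet> edge_diff ((\<lambda>_. 0)(i:=v)) e) = AT E lam i \<bullet> v"
proof -
  have "(\<Sum>e\<in>E. lam e \<bullet> edge_diff ((\<lambda>_. 0)(i:=v)) e) = (\<Sum>j<N. AT E lam j \<bullet> ((\<lambda>_. 0)(i:=v)) j)"
    by (rule adjoint[OF ve, symmetric])
  also have "\<dots> = (\<Sum>j<N. if j = i then AT E lam i \<bullet> v else 0)"
    by (rule sum.cong) auto
  also have "\<dots> = AT E lam i \<bullet> v" using i by simp
  finally show ?thesis .
qed

lemma Fi_deriv:
  assumes gr: "\<And>z. (f i has_derivative (\<lambda>(a, b). gc i z \<bullet> a + gh i z \<bullet> b)) (at z)"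
  shows "((\<lambda>w. Fi f mu1 mu2 i w y) has_derivative (\<lambda>v. (gc i (w, y) + mu1 *\<^sub>R w) \<bullet> v)) (at w)"
proof -
  have "((\<lambda>w. (w, y)) has_derivative (\<lambda>v. (v, 0))) (at w)"
    by (auto intro!: derivative_eq_intros)
  from has_derivative_compose[OF this gr]
  have d1: "((\<lambda>w. f i (w, y)) has_derivative (\<lambda>v. gc i (w, y) \<bullet> v)) (at w)" by simp
  have "((\<lambda>w. f i (w, y) + mu1 / 2 * (w \<bullet> w) + mu2 / 2 * (norm y)\<^sup>2) has_derivative
      (\<lambda>v. gc i (w, y) \<bullet> v + mu1 / 2 * (w \<bullet> v + v \<bullet> w) + 0)) (at w)"
    by (intro derivative_intros d1)
  then show ?thesis
    unfolding Fi_def power2_norm_eq_inner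
    by (rule has_derivative_eq_rhs) (auto simp: inner_commute inner_add_left algebra_simps)
qed

lemma lagr_deriv:
  assumes ve: "valid_edges N E" and i: "i < N"
    and gr: "\<And>z. (f i has_derivative (\<lambda>(a, b). gc i z \<bullet> a + gh i z \<bullet> b)) (at z)"
  shows "((\<lambda>w. lagr f mu1 mu2 N E rho (X(i:=w)) Y lam) has_derivative
     (\<lambda>v. (gc i (w, Y i) + mu1 *\<^sub>R w - AT E lam i + rho *\<^sub>R AT E (edge_diff (X(i:=w))) i) \<bullet> v)) (at w)"
proof -
  have FFeq: "FF f mu1 mu2 N (X(i:=w)) Y = Fi f mu1 mu2 i w (Y i) + (\<Sum>j\<in>{..<N}-{i}. Fi f mu1 mu2 j (X j) (Y j))" for w
  proof -
    have "FF f mu1 mu2 N (X(i:=w)) Y = Fi f mu1 mu2 i w (Y i) + (\<Sum>j\<in>{..<N}-{i}. Fi f mu1 mu2 j ((X(i:=w)) j) (Y j))"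
      unfolding FF_def using i by (simp add: sum.remove)
    also have "(\<Sum>j\<in>{..<N}-{i}. Fi f mu1 mu2 j ((X(i:=w)) j) (Y j)) = (\<Sum>j\<in>{..<N}-{i}. Fi f mu1 mu2 j (X j) (Y j))"
      by (rule sum.cong) auto
    finally show ?thesis .
  qed
  have d: "((\<lambda>w. Fi f mu1 mu2 i w (Y i) + (\<Sum>j\<in>{..<N}-{i}. Fi f mu1 mu2 j (X j) (Y j))
        - (\<Sum>e\<in>E. lam e \<bullet> edge_diff (X(i:=w)) e)
        + rho / 2 * (\<Sum>e\<in>E. edge_diff (X(i:=w)) e \<bullet> edge_diff (X(i:=w)) e)) has_derivative
      (\<lambda>v. (gc i (w, Y i) + mu1 *\<^sub>R w) \<bullet> v + 0
        - (\<Sum>e\<in>E. lam e \<bullet> edge_diff ((\<lambda>_. 0)(i:=v)) e)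
        + rho / 2 * (\<Sum>e\<in>E. edge_diff (X(i:=w)) e \<bullet> edge_diff ((\<lambda>_. 0)(i:=v)) e
              + edge_diff ((\<lambda>_. 0)(i:=v)) e \<bullet> edge_diff (X(i:=w)) e))) (at w)"
    by (intro derivative_intros Fi_deriv[of f i gc gh, OF gr] ed_upd_deriv has_derivative_inner_right)
  have "(\<lambda>v. (gc i (w, Y i) + mu1 *\<^sub>R w) \<bullet> v + 0
        - (\<Sum>e\<in>E. lam e \<bullet> edge_diff ((\<lambda>_. 0)(i:=v)) e)
        + rho / 2 * (\<Sum>e\<in>E. edge_diff (X(i:=w)) e \<bullet> edge_diff ((\<lambda>_. 0)(i:=v)) e
              + edge_diff ((\<lambda>_. 0)(i:=v)) e \<bullet> edge_diff (X(i:=w)) e))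
      = (\<lambda>v. (gc i (w, Y i) + mu1 *\<^sub>R w - AT E lam i + rho *\<^sub>R AT E (edge_diff (X(i:=w))) i) \<bullet> v)"
  proof
    fix v
    have "(\<Sum>e\<in>E. edge_diff (X(i:=w)) e \<bullet> edge_diff ((\<lambda>_. 0)(i:=v)) e
              + edge_diff ((\<lambda>_. 0)(i:=v)) e \<bullet> edge_diff (X(i:=w)) e)
        = 2 * (\<Sum>e\<in>E. edge_diff (X(i:=w)) e \<bullet> edge_diff ((\<lambda>_. 0)(i:=v)) e)"
      by (simp add: inner_commute sum_distrib_left)
    also have "\<dots> = 2 * (AT E (edge_diff (X(i:=w))) i \<bullet> v)"
      by (simp add: adjoint_delta[OF ve i])
    finally show "(gc i (w, Y i) + mu1 *\<^sub>R w) \<bullet> v + 0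
        - (\<Sum>e\<in>E. lam e \<bullet> edge_diff ((\<lambda>_. 0)(i:=v)) e)
        + rho / 2 * (\<Sum>e\<in>E. edge_diff (X(i:=w)) e \<bullet> edge_diff ((\<lambda>_. 0)(i:=v)) e
              + edge_diff ((\<lambda>_. 0)(i:=v)) e \<bullet> edge_diff (X(i:=w)) e)
      = (gc i (w, Y i) + mu1 *\<^sub>R w - AT E lam i + rho *\<^sub>R AT E (edge_diff (X(i:=w))) i) \<bullet> v"
      by (simp add: adjoint_delta[OF ve i] inner_diff_left inner_add_left)
  qed
  with d show ?thesis
    unfolding lagr_def FFeq power2_norm_eq_inner by (rule has_derivative_eq_rhs)
qed



lemma Fi_deriv2:
  assumes gr: "\<And>z. (f i has_derivative (\<lambda>(a, b). gc i z \<bullet> a + gh i z \<bullet> b)) (at z)"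
  shows "((\<lambda>w. Fi f mu1 mu2 i x w) has_derivative (\<lambda>v. (gh i (x, w) + mu2 *\<^sub>R w) \<bullet> v)) (at w)"
proof -
  have "((\<lambda>w. (x, w)) has_derivative (\<lambda>v. (0, v))) (at w)"
    by (auto intro!: derivative_eq_intros)
  from has_derivative_compose[OF this gr]
  have d1: "((\<lambda>w. f i (x, w)) has_derivative (\<lambda>v. gh i (x, w) \<bullet> v)) (at w)" by simp
  have "((\<lambda>w. f i (x, w) + mu1 / 2 * (x \<bullet> x) + mu2 / 2 * (w \<bullet> w)) has_derivative
      (\<lambda>v. gh i (x, w) \<bullet> v + 0 + mu2 / 2 * (w \<bullet> v + v \<bullet> w))) (at w)"
    by (intro derivative_intros d1)
  then show ?thesis
    unfolding Fi_def power2_norm_eq_inner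
    by (rule has_derivative_eq_rhs) (auto simp: inner_commute inner_add_left algebra_simps)
qed

lemma sqdist_deriv:
  "((\<lambda>w. c / 2 * (norm (w - x0))\<^sup>2) has_derivative (\<lambda>v. (c *\<^sub>R (w - x0)) \<bullet> v)) (at w)"
proof -
  have "((\<lambda>w. c / 2 * ((w - x0) \<bullet> (w - x0))) has_derivative (\<lambda>v. c / 2 * ((w - x0) \<bullet> (v - 0) + (v - 0) \<bullet> (w - x0)))) (at w)"
    by (intro derivative_intros)
  then show ?thesis unfolding power2_norm_eq_inner
    by (rule has_derivative_eq_rhs) (auto simp: inner_commute algebra_simps)
qed

lemma vec_id:
  fixes gq gs x' xs xk Al Als r Aw Aa AB :: "'a::real_vector"
  assumes h1: "gq + mu1 *\<^sub>R x' - Al + rho *\<^sub>R r + tau *\<^sub>R (x' - xk) = 0"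
    and h2: "Als = gs + mu1 *\<^sub>R xs"
    and h3: "r = Aw + Aa - d *\<^sub>R (xk - x')"
  shows "gq - gs + mu1 *\<^sub>R (x' - xs) = (Al - Als - rho *\<^sub>R Aw - rho *\<^sub>R Aa) + (tau + rho * d) *\<^sub>R (xk - x')"
proof -
  have "gq = Al - mu1 *\<^sub>R x' - rho *\<^sub>R r - tau *\<^sub>R (x' - xk)" using h1 by (simp add: algebra_simps)
  then show ?thesis unfolding h2 h3 by (simp add: algebra_simps)
qed

lemma edge_alg:
  fixes L w a :: "'a::real_inner"
  assumes "g * rho \<noteq> 0"
  shows "2 * ((L - rho *\<^sub>R w - rho *\<^sub>R a) \<bullet> w) = (1 / (g * rho)) * ((norm L)\<^sup>2 - (norm (L - (g * rho) *\<^sub>R w))\<^sup>2)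
     - (2 - g) * rho * (norm w)\<^sup>2 - 2 * rho * (a \<bullet> w)"
proof -
  have "(norm (L - (g * rho) *\<^sub>R w))\<^sup>2 = (norm L)\<^sup>2 - 2 * (g * rho) * (L \<bullet> w) + ((g * rho) * (g * rho)) * (norm w)\<^sup>2"
    by (simp add: power2_norm_eq_inner inner_diff_left inner_diff_right inner_commute algebra_simps)
  then have "(1 / (g * rho)) * ((norm L)\<^sup>2 - (norm (L - (g * rho) *\<^sub>R w))\<^sup>2) = 2 * (L \<bullet> w) - g * rho * (norm w)\<^sup>2"
    using assms by (simp add: field_simps power2_eq_square)
  then show ?thesis
    by (simp add: inner_diff_left power2_norm_eq_inner algebra_simps)
qed

lemma vert_alg:
  fixes d b :: "'a::real_inner"
  shows "2 * (d \<bullet> b) = (norm (d + b))\<^sup>2 - (norm b)\<^sup>2 - (norm d)\<^sup>2"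
  by (simp add: power2_norm_eq_inner inner_add_left inner_add_right inner_commute)

locale setting =
  fixes N :: nat and E :: "(nat \<times> nat) set"
    and f :: "nat \<Rightarrow> ((real^'n) \<times> (real^'n)) \<Rightarrow> real"
    and gc gh :: "nat \<Rightarrow> ((real^'n) \<times> (real^'n)) \<Rightarrow> real^'n"
    and C tau zeta :: "nat \<Rightarrow> real"
    and mu1 mu2 m rho gamma :: real
    and Wc Wh :: "nat \<Rightarrow> nat \<Rightarrow> real^'n"
    and lam :: "nat \<Rightarrow> nat \<times> nat \<Rightarrow> real^'n"
  assumes N2: "N \<ge> 2"
    and edges: "valid_edges N E"
    and grad: "\<And>i z. i < N \<Longrightarrow>
        (f i has_derivative (\<lambda>(a, b). gc i z \<bullet> a + gh i z \<bullet> b)) (at z)"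
    and cvx: "\<And>i. i < N \<Longrightarrow> convex_on UNIV (f i)"
    and lip: "\<And>i z z'. i < N \<Longrightarrow>
        norm ((gc i z, gh i z) - (gc i z', gh i z')) \<le> C i * norm (z - z')"
    and mu1: "mu1 \<ge> 0" and mu2: "mu2 > 0"
    and m: "0 < m" "m \<le> mu2"
    and rho: "rho > 0"
    and gamma: "0 < gamma" "gamma < 2"
    and tau: "\<And>i. i < N \<Longrightarrow> tau i > rho * (real N / (2 - gamma) - 1) * real (degree E i)"
    and zeta: "\<And>i. i < N \<Longrightarrow> zeta i > C i / m * (C i + m)"
    and step_i: "\<And>k i w. i < N \<Longrightarrow>
        lagr f mu1 mu2 N E rho ((Wc k)(i := Wc (Suc k) i)) (Wh k) (lam k)
          + tau i / 2 * (norm (Wc (Suc k) i - Wc k i))\<^sup>2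
        \<le> lagr f mu1 mu2 N E rho ((Wc k)(i := w)) (Wh k) (lam k)
          + tau i / 2 * (norm (w - Wc k i))\<^sup>2"
    and step_ii: "\<And>k e. e \<in> E \<Longrightarrow>
        lam (Suc k) e = lam k e - (gamma * rho) *\<^sub>R edge_diff (Wc (Suc k)) e"
    and step_iii: "\<And>k i w. i < N \<Longrightarrow>
        Fi f mu1 mu2 i (Wc (Suc k) i) (Wh (Suc k) i)
          + zeta i / 2 * (norm (Wh (Suc k) i - Wh k i))\<^sup>2
        \<le> Fi f mu1 mu2 i (Wc (Suc k) i) w + zeta i / 2 * (norm (w - Wh k i))\<^sup>2"
begin

lemma OCx:
  assumes i: "i < N"
  shows "gc i (Wc (Suc k) i, Wh k i) + mu1 *\<^sub>R Wc (Suc k) i - AT E (lam k) i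
     + rho *\<^sub>R AT E (edge_diff ((Wc k)(i := Wc (Suc k) i))) i + tau i *\<^sub>R (Wc (Suc k) i - Wc k i) = 0"
proof (rule grad_zero_at_min)
  let ?phi = "\<lambda>w. lagr f mu1 mu2 N E rho ((Wc k)(i := w)) (Wh k) (lam k) + tau i / 2 * (norm (w - Wc k i))\<^sup>2"
  show "(?phi has_derivative (\<lambda>v. (gc i (Wc (Suc k) i, Wh k i) + mu1 *\<^sub>R Wc (Suc k) i - AT E (lam k) i
     + rho *\<^sub>R AT E (edge_diff ((Wc k)(i := Wc (Suc k) i))) i + tau i *\<^sub>R (Wc (Suc k) i - Wc k i)) \<bullet> v)) (at (Wc (Suc k) i))"
    by (rule has_derivative_eq_rhs, rule has_derivative_add[OF lagr_deriv[where f=f and gc=gc and gh=gh, OF edges i grad[OF i]] sqdist_deriv])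
      (simp add: inner_add_left)
  show "?phi (Wc (Suc k) i) \<le> ?phi w" for w using step_i[OF i, of k w] by simp
qed

lemma OCy:
  assumes i: "i < N"
  shows "gh i (Wc (Suc k) i, Wh (Suc k) i) + mu2 *\<^sub>R Wh (Suc k) i + zeta i *\<^sub>R (Wh (Suc k) i - Wh k i) = 0"
proof (rule grad_zero_at_min)
  let ?phi = "\<lambda>w. Fi f mu1 mu2 i (Wc (Suc k) i) w + zeta i / 2 * (norm (w - Wh k i))\<^sup>2"
  show "(?phi has_derivative (\<lambda>v. (gh i (Wc (Suc k) i, Wh (Suc k) i) + mu2 *\<^sub>R Wh (Suc k) i + zeta i *\<^sub>R (Wh (Suc k) i - Wh k i)) \<bullet> v)) (at (Wh (Suc k) i))"
    by (rule has_derivative_eq_rhs, rule has_derivative_add[OF Fi_deriv2[of f i gc gh, OF grad[OF i]] sqdist_deriv])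
      (simp add: inner_add_left)
  show "?phi (Wh (Suc k) i) \<le> ?phi w" for w using step_iii[OF i, of k w] by simp
qed

lemma r_decomp:
  "AT E (edge_diff ((Wc k)(i := Wc (Suc k) i))) i
   = AT E (edge_diff (Wc (Suc k))) i + AT E (edge_diff (\<lambda>j. Wc k j - Wc (Suc k) j)) i
     - real (degree E i) *\<^sub>R (Wc k i - Wc (Suc k) i)"
proof -
  have "(Wc k)(i := Wc (Suc k) i) = (\<lambda>j. (Wc (Suc k) j + (Wc k j - Wc (Suc k) j)) - ((\<lambda>_. 0)(i := Wc k i - Wc (Suc k) i)) j)"
    by auto
  then have "edge_diff ((Wc k)(i := Wc (Suc k) i)) = (\<lambda>e. (edge_diff (Wc (Suc k)) e + edge_diff (\<lambda>j. Wc k j - Wc (Suc k) j) e)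
      - edge_diff ((\<lambda>_. 0)(i := Wc k i - Wc (Suc k) i)) e)"
    by (simp add: edge_diff_def fun_eq_iff)
  then show ?thesis
    by (simp only: AT_diff AT_add AT_delta[OF edges])
qed

definition "Kc i = C i / 2 + (C i)\<^sup>2 / (4 * m)"
definition "Dc i = tau i + rho * real (degree E i)"

lemma vertex_ineq:
  assumes kkt: "is_KKT gc gh mu1 mu2 N E xs ys ls" and i: "i < N"
  shows "AT E (\<lambda>e. lam k e - ls e - rho *\<^sub>R edge_diff (Wc (Suc k)) e
            - rho *\<^sub>R edge_diff (\<lambda>j. Wc k j - Wc (Suc k) j) e) i \<bullet> (Wc (Suc k) i - xs i)
       + Dc i * ((Wc k i - Wc (Suc k) i) \<bullet> (Wc (Suc k) i - xs i))
       + zeta i * ((Wh k i - Wh (Suc k) i) \<bullet> (Wh (Suc k) i - ys i))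
     \<ge> - Kc i * (norm (Wh k i - Wh (Suc k) i))\<^sup>2"
proof -
  define G where "G z = (gc i z, gh i z)" for z
  have dG: "(f i has_derivative (\<lambda>h. G z \<bullet> h)) (at z)" for z
  proof -
    have "(\<lambda>(a, b). gc i z \<bullet> a + gh i z \<bullet> b) = (\<lambda>h. G z \<bullet> h)"
      by (auto simp: G_def fun_eq_iff)
    then show ?thesis using grad[OF i, of z] by simp
  qed
  have LG: "norm (G z - G z') \<le> C i * norm (z - z')" for z z'
    using lip[OF i] by (simp add: G_def)
  have M: "(fst (G (Wc (Suc k) i, Wh k i)) - fst (G (xs i, ys i))) \<bullet> (Wc (Suc k) i - xs i)
      + (snd (G (Wc (Suc k) i, Wh (Suc k) i)) - snd (G (xs i, ys i))) \<bullet> (Wh (Suc k) i - ys i)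
      + mu2 * (norm (Wh (Suc k) i - ys i))\<^sup>2 \<ge> - (C i / 2 + (C i)\<^sup>2 / (4 * m)) * (norm (Wh k i - Wh (Suc k) i))\<^sup>2"
    by (rule mono3[OF cvx[OF i] dG LG m])
  have kx: "AT E ls i = gc i (xs i, ys i) + mu1 *\<^sub>R xs i" and ky: "gh i (xs i, ys i) + mu2 *\<^sub>R ys i = 0"
    using kkt i unfolding is_KKT_def by auto
  have ox: "gc i (Wc (Suc k) i, Wh k i) - gc i (xs i, ys i) + mu1 *\<^sub>R (Wc (Suc k) i - xs i)
     = AT E (\<lambda>e. lam k e - ls e - rho *\<^sub>R edge_diff (Wc (Suc k)) e
            - rho *\<^sub>R edge_diff (\<lambda>j. Wc k j - Wc (Suc k) j) e) i + Dc i *\<^sub>R (Wc k i - Wc (Suc k) i)"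
  proof -
    have "AT E (\<lambda>e. lam k e - ls e - rho *\<^sub>R edge_diff (Wc (Suc k)) e
            - rho *\<^sub>R edge_diff (\<lambda>j. Wc k j - Wc (Suc k) j) e) i
        = AT E (lam k) i - AT E ls i - rho *\<^sub>R AT E (edge_diff (Wc (Suc k))) i
          - rho *\<^sub>R AT E (edge_diff (\<lambda>j. Wc k j - Wc (Suc k) j)) i"
      by (simp only: AT_diff AT_scale)
    then show ?thesis using vec_id[OF OCx[OF i, of k] kx r_decomp[of k i]]
      by (simp add: Dc_def)
  qed
  have oy: "gh i (Wc (Suc k) i, Wh (Suc k) i) - gh i (xs i, ys i) + mu2 *\<^sub>R (Wh (Suc k) i - ys i)
     = zeta i *\<^sub>R (Wh k i - Wh (Suc k) i)"
    using OCy[OF i, of k] ky by (simp add: algebra_simps)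
  have e1: "AT E (\<lambda>e. lam k e - ls e - rho *\<^sub>R edge_diff (Wc (Suc k)) e
            - rho *\<^sub>R edge_diff (\<lambda>j. Wc k j - Wc (Suc k) j) e) i \<bullet> (Wc (Suc k) i - xs i)
       + Dc i * ((Wc k i - Wc (Suc k) i) \<bullet> (Wc (Suc k) i - xs i))
     = (gc i (Wc (Suc k) i, Wh k i) - gc i (xs i, ys i)) \<bullet> (Wc (Suc k) i - xs i) + mu1 * (norm (Wc (Suc k) i - xs i))\<^sup>2"
  proof -
    have "(gc i (Wc (Suc k) i, Wh k i) - gc i (xs i, ys i) + mu1 *\<^sub>R (Wc (Suc k) i - xs i)) \<bullet> (Wc (Suc k) i - xs i)
      = (AT E (\<lambda>e. lam k e - ls e - rho *\<^sub>R edge_diff (Wc (Suc k)) e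
            - rho *\<^sub>R edge_diff (\<lambda>j. Wc k j - Wc (Suc k) j) e) i + Dc i *\<^sub>R (Wc k i - Wc (Suc k) i)) \<bullet> (Wc (Suc k) i - xs i)"
      by (simp only: ox)
    then show ?thesis by (simp add: inner_add_left power2_norm_eq_inner)
  qed
  have e2: "zeta i * ((Wh k i - Wh (Suc k) i) \<bullet> (Wh (Suc k) i - ys i))
     = (gh i (Wc (Suc k) i, Wh (Suc k) i) - gh i (xs i, ys i)) \<bullet> (Wh (Suc k) i - ys i) + mu2 * (norm (Wh (Suc k) i - ys i))\<^sup>2"
  proof -
    have "(gh i (Wc (Suc k) i, Wh (Suc k) i) - gh i (xs i, ys i) + mu2 *\<^sub>R (Wh (Suc k) i - ys i)) \<bullet> (Wh (Suc k) i - ys i)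
       = (zeta i *\<^sub>R (Wh k i - Wh (Suc k) i)) \<bullet> (Wh (Suc k) i - ys i)"
      by (simp only: oy)
    then show ?thesis by (simp add: inner_add_left power2_norm_eq_inner)
  qed
  have "mu1 * (norm (Wc (Suc k) i - xs i))\<^sup>2 \<ge> 0" using mu1 by simp
  then show ?thesis using M e1 e2 unfolding Kc_def G_def by simp
qed

definition "Psi xs ys ls k = (1 / (gamma * rho)) * (\<Sum>e\<in>E. (norm (lam k e - ls e))\<^sup>2)
   + (\<Sum>i<N. Dc i * (norm (Wc k i - xs i))\<^sup>2) + (\<Sum>i<N. zeta i * (norm (Wh k i - ys i))\<^sup>2)"

lemma fejer_core:
  assumes kkt: "is_KKT gc gh mu1 mu2 N E xs ys ls"
  shows "Psi xs ys ls k - Psi xs ys ls (Suc k) \<ge>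
     (2 - gamma) * rho * (\<Sum>e\<in>E. (norm (edge_diff (Wc (Suc k)) e))\<^sup>2)
     + 2 * rho * (\<Sum>e\<in>E. edge_diff (\<lambda>j. Wc k j - Wc (Suc k) j) e \<bullet> edge_diff (Wc (Suc k)) e)
     + (\<Sum>i<N. Dc i * (norm (Wc k i - Wc (Suc k) i))\<^sup>2)
     + (\<Sum>i<N. (zeta i - 2 * Kc i) * (norm (Wh k i - Wh (Suc k) i))\<^sup>2)"
proof -
  define w where "w = (\<lambda>e. edge_diff (Wc (Suc k)) e)"
  define a where "a = (\<lambda>e. edge_diff (\<lambda>j. Wc k j - Wc (Suc k) j) e)"
  define B where "B = (\<lambda>e. lam k e - ls e - rho *\<^sub>R w e - rho *\<^sub>R a e)"
  have kE: "edge_diff xs e = 0" if "e \<in> E" for e using kkt that unfolding is_KKT_def by auto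
  have S: "(\<Sum>i<N. AT E B i \<bullet> (Wc (Suc k) i - xs i))
       + (\<Sum>i<N. Dc i * ((Wc k i - Wc (Suc k) i) \<bullet> (Wc (Suc k) i - xs i)))
       + (\<Sum>i<N. zeta i * ((Wh k i - Wh (Suc k) i) \<bullet> (Wh (Suc k) i - ys i)))
     \<ge> (\<Sum>i<N. - Kc i * (norm (Wh k i - Wh (Suc k) i))\<^sup>2)"
  proof -
    have "(\<Sum>i<N. - Kc i * (norm (Wh k i - Wh (Suc k) i))\<^sup>2) \<le>
      (\<Sum>i<N. AT E B i \<bullet> (Wc (Suc k) i - xs i) + Dc i * ((Wc k i - Wc (Suc k) i) \<bullet> (Wc (Suc k) i - xs i))
         + zeta i * ((Wh k i - Wh (Suc k) i) \<bullet> (Wh (Suc k) i - ys i)))"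
      unfolding B_def w_def a_def by (rule sum_mono) (use vertex_ineq[OF kkt] in simp)
    then show ?thesis by (simp add: sum.distrib)
  qed
  have S1: "(\<Sum>i<N. AT E B i \<bullet> (Wc (Suc k) i - xs i)) = (\<Sum>e\<in>E. B e \<bullet> w e)"
  proof -
    have "(\<Sum>i<N. AT E B i \<bullet> (Wc (Suc k) i - xs i)) = (\<Sum>e\<in>E. B e \<bullet> edge_diff (\<lambda>i. Wc (Suc k) i - xs i) e)"
      by (rule adjoint[OF edges])
    also have "\<dots> = (\<Sum>e\<in>E. B e \<bullet> w e)"
      by (rule sum.cong) (simp_all add: edge_diff_diff kE w_def)
    finally show ?thesis .
  qed
  have gr: "gamma * rho \<noteq> 0" using gamma rho by simp
  have L1: "2 * (B e \<bullet> w e) = (1 / (gamma * rho)) * ((norm (lam k e - ls e))\<^sup>2 - (norm (lam (Suc k) e - ls e))\<^sup>2)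
     - (2 - gamma) * rho * (norm (w e))\<^sup>2 - 2 * rho * (a e \<bullet> w e)" if "e \<in> E" for e
  proof -
    have eq: "lam (Suc k) e - ls e = (lam k e - ls e) - (gamma * rho) *\<^sub>R w e"
      using step_ii[OF that, of k] by (simp add: w_def)
    show ?thesis unfolding B_def eq using edge_alg[OF gr, of "lam k e - ls e" "w e" "a e"] by simp
  qed
  have L2: "2 * (Dc i * ((Wc k i - Wc (Suc k) i) \<bullet> (Wc (Suc k) i - xs i)))
     = Dc i * (norm (Wc k i - xs i))\<^sup>2 - Dc i * (norm (Wc (Suc k) i - xs i))\<^sup>2 - Dc i * (norm (Wc k i - Wc (Suc k) i))\<^sup>2" for i
  proof -
    have v: "2 * ((Wc k i - Wc (Suc k) i) \<bullet> (Wc (Suc k) i - xs i)) = (norm (Wc k i - xs i))\<^sup>2 - (norm (Wc (Suc k) i - xs i))\<^sup>2 - (norm (Wc k i - Wc (Suc k) i))\<^sup>2"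
      using vert_alg[of "Wc k i - Wc (Suc k) i" "Wc (Suc k) i - xs i"] by simp
    have "2 * (Dc i * ((Wc k i - Wc (Suc k) i) \<bullet> (Wc (Suc k) i - xs i))) = Dc i * (2 * ((Wc k i - Wc (Suc k) i) \<bullet> (Wc (Suc k) i - xs i)))" by simp
    also have "\<dots> = Dc i * ((norm (Wc k i - xs i))\<^sup>2 - (norm (Wc (Suc k) i - xs i))\<^sup>2 - (norm (Wc k i - Wc (Suc k) i))\<^sup>2)" by (simp only: v)
    finally show ?thesis by (simp add: right_diff_distrib)
  qed
  have L3: "2 * (zeta i * ((Wh k i - Wh (Suc k) i) \<bullet> (Wh (Suc k) i - ys i)))
     = zeta i * (norm (Wh k i - ys i))\<^sup>2 - zeta i * (norm (Wh (Suc k) i - ys i))\<^sup>2 - zeta i * (norm (Wh k i - Wh (Suc k) i))\<^sup>2" for i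
  proof -
    have v: "2 * ((Wh k i - Wh (Suc k) i) \<bullet> (Wh (Suc k) i - ys i)) = (norm (Wh k i - ys i))\<^sup>2 - (norm (Wh (Suc k) i - ys i))\<^sup>2 - (norm (Wh k i - Wh (Suc k) i))\<^sup>2"
      using vert_alg[of "Wh k i - Wh (Suc k) i" "Wh (Suc k) i - ys i"] by simp
    have "2 * (zeta i * ((Wh k i - Wh (Suc k) i) \<bullet> (Wh (Suc k) i - ys i))) = zeta i * (2 * ((Wh k i - Wh (Suc k) i) \<bullet> (Wh (Suc k) i - ys i)))" by simp
    also have "\<dots> = zeta i * ((norm (Wh k i - ys i))\<^sup>2 - (norm (Wh (Suc k) i - ys i))\<^sup>2 - (norm (Wh k i - Wh (Suc k) i))\<^sup>2)" by (simp only: v)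
    finally show ?thesis by (simp add: right_diff_distrib)
  qed
  have T1: "2 * (\<Sum>e\<in>E. B e \<bullet> w e) = (1 / (gamma * rho)) * ((\<Sum>e\<in>E. (norm (lam k e - ls e))\<^sup>2) - (\<Sum>e\<in>E. (norm (lam (Suc k) e - ls e))\<^sup>2))
     - (2 - gamma) * rho * (\<Sum>e\<in>E. (norm (w e))\<^sup>2) - 2 * rho * (\<Sum>e\<in>E. a e \<bullet> w e)"
  proof -
    have "2 * (\<Sum>e\<in>E. B e \<bullet> w e) = (\<Sum>e\<in>E. 2 * (B e \<bullet> w e))" by (simp add: sum_distrib_left)
    also have "\<dots> = (\<Sum>e\<in>E. (1 / (gamma * rho)) * ((norm (lam k e - ls e))\<^sup>2 - (norm (lam (Suc k) e - ls e))\<^sup>2)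
     - (2 - gamma) * rho * (norm (w e))\<^sup>2 - 2 * rho * (a e \<bullet> w e))"
      by (rule sum.cong) (simp_all add: L1)
    also have "\<dots> = (1 / (gamma * rho)) * ((\<Sum>e\<in>E. (norm (lam k e - ls e))\<^sup>2) - (\<Sum>e\<in>E. (norm (lam (Suc k) e - ls e))\<^sup>2))
     - (2 - gamma) * rho * (\<Sum>e\<in>E. (norm (w e))\<^sup>2) - 2 * rho * (\<Sum>e\<in>E. a e \<bullet> w e)"
      by (simp add: sum_subtractf sum_distrib_left right_diff_distrib)
    finally show ?thesis .
  qed
  have T2: "2 * (\<Sum>i<N. Dc i * ((Wc k i - Wc (Suc k) i) \<bullet> (Wc (Suc k) i - xs i)))
     = (\<Sum>i<N. Dc i * (norm (Wc k i - xs i))\<^sup>2) - (\<Sum>i<N. Dc i * (norm (Wc (Suc k) i - xs i))\<^sup>2) - (\<Sum>i<N. Dc i * (norm (Wc k i - Wc (Suc k) i))\<^sup>2)"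
    by (simp add: sum_distrib_left L2 sum_subtractf)
  have T3: "2 * (\<Sum>i<N. zeta i * ((Wh k i - Wh (Suc k) i) \<bullet> (Wh (Suc k) i - ys i)))
     = (\<Sum>i<N. zeta i * (norm (Wh k i - ys i))\<^sup>2) - (\<Sum>i<N. zeta i * (norm (Wh (Suc k) i - ys i))\<^sup>2) - (\<Sum>i<N. zeta i * (norm (Wh k i - Wh (Suc k) i))\<^sup>2)"
    by (simp add: sum_distrib_left L3 sum_subtractf)
  have T4: "(\<Sum>i<N. (zeta i - 2 * Kc i) * (norm (Wh k i - Wh (Suc k) i))\<^sup>2)
     = (\<Sum>i<N. zeta i * (norm (Wh k i - Wh (Suc k) i))\<^sup>2) + 2 * (\<Sum>i<N. - Kc i * (norm (Wh k i - Wh (Suc k) i))\<^sup>2)"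
    by (simp add: sum_distrib_left left_diff_distrib sum_subtractf sum_negf mult.assoc)
  have P: "Psi xs ys ls k - Psi xs ys ls (Suc k) = (1 / (gamma * rho)) * ((\<Sum>e\<in>E. (norm (lam k e - ls e))\<^sup>2) - (\<Sum>e\<in>E. (norm (lam (Suc k) e - ls e))\<^sup>2))
     + ((\<Sum>i<N. Dc i * (norm (Wc k i - xs i))\<^sup>2) - (\<Sum>i<N. Dc i * (norm (Wc (Suc k) i - xs i))\<^sup>2))
     + ((\<Sum>i<N. zeta i * (norm (Wh k i - ys i))\<^sup>2) - (\<Sum>i<N. zeta i * (norm (Wh (Suc k) i - ys i))\<^sup>2))"
    unfolding Psi_def by (simp add: right_diff_distrib)
  show ?thesis using S S1 T1 T2 T3 T4 P unfolding w_def a_def by linarith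
qed

lemma young2:
  fixes a w :: "'a::real_inner"
  assumes t: "t > 0"
  shows "2 * (a \<bullet> w) \<ge> - t * (norm w)\<^sup>2 - (norm a)\<^sup>2 / t"
proof -
  have "0 \<le> (norm (t *\<^sub>R w + a))\<^sup>2" by simp
  also have "\<dots> = t * t * (norm w)\<^sup>2 + 2 * t * (a \<bullet> w) + (norm a)\<^sup>2"
    by (simp add: power2_norm_eq_inner inner_add_left inner_add_right inner_commute algebra_simps)
  finally have "0 \<le> t * (t * (norm w)\<^sup>2 + 2 * (a \<bullet> w)) + (norm a)\<^sup>2" by (simp add: algebra_simps)
  then have "- (norm a)\<^sup>2 / t \<le> t * (norm w)\<^sup>2 + 2 * (a \<bullet> w)"
    using t by (simp add: field_simps)
  then show ?thesis by simp
qed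

lemma tau_pos: "i < N \<Longrightarrow> tau i > 0"
proof -
  assume i: "i < N"
  have "real N / (2 - gamma) \<ge> 1" using N2 gamma by (simp add: field_simps)
  then have "rho * (real N / (2 - gamma) - 1) * real (degree E i) \<ge> 0" using rho by simp
  then show ?thesis using tau[OF i] by linarith
qed

lemma Dc_pos: "i < N \<Longrightarrow> Dc i > 0"
  using tau_pos rho unfolding Dc_def by (simp add: add_pos_nonneg)

lemma ratio_lt: "i < N \<Longrightarrow> 2 * rho * real (degree E i) / Dc i < 2 - gamma"
proof -
  assume i: "i < N"
  have "rho * gamma * real (degree E i) \<le> rho * (real N - (2 - gamma)) * real (degree E i)"
    using N2 rho by (intro mult_right_mono mult_left_mono) auto
  also have "\<dots> = (2 - gamma) * (rho * (real N / (2 - gamma) - 1) * real (degree E i))"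
    using gamma by (simp add: field_simps)
  also have "\<dots> < (2 - gamma) * tau i"
    using tau[OF i] gamma by simp
  finally have h: "rho * gamma * real (degree E i) < (2 - gamma) * tau i" .
  have "(2 - gamma) * Dc i = (2 - gamma) * tau i + 2 * rho * real (degree E i) - rho * gamma * real (degree E i)"
    unfolding Dc_def by (simp add: algebra_simps)
  then have "2 * rho * real (degree E i) < (2 - gamma) * Dc i" using h by linarith
  then show ?thesis using Dc_pos[OF i] by (simp add: field_simps)
qed

definition "r0 = Max ((\<lambda>i. 2 * rho * real (degree E i) / Dc i) ` {..<N})"
definition "t0 = (r0 + (2 - gamma)) / 2"

lemma r0_props: "r0 < 2 - gamma" "r0 \<ge> 0" "i < N \<Longrightarrow> 2 * rho * real (degree E i) / Dc i \<le> r0"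
proof -
  have "0 \<in> {..<N}" using N2 by simp
  then have ne: "{..<N} \<noteq> {}" by blast
  show "r0 < 2 - gamma" unfolding r0_def using ratio_lt ne by (subst Max_less_iff) auto
  show "i < N \<Longrightarrow> 2 * rho * real (degree E i) / Dc i \<le> r0" unfolding r0_def by (intro Max_ge) auto
  have "2 * rho * real (degree E 0) / Dc 0 \<le> r0" unfolding r0_def using N2 by (intro Max_ge) auto
  moreover have "2 * rho * real (degree E 0) / Dc 0 \<ge> 0" using rho Dc_pos[of 0] N2 by simp
  ultimately show "r0 \<ge> 0" by linarith
qed

lemma t0_props: "t0 > 0" "t0 < 2 - gamma" "r0 < t0"
  using r0_props(1,2) unfolding t0_def by auto

definition "cw = (2 - gamma - t0) * rho"
definition "cx i = Dc i - 2 * rho * real (degree E i) / t0"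
definition "cy i = zeta i - 2 * Kc i"

lemma consts_pos: "cw > 0" "i < N \<Longrightarrow> cx i > 0" "i < N \<Longrightarrow> cy i > 0"
proof -
  show "cw > 0" unfolding cw_def using t0_props rho by simp
  assume i: "i < N"
  have "2 * rho * real (degree E i) = (2 * rho * real (degree E i) / Dc i) * Dc i"
    using Dc_pos[OF i] by simp
  also have "\<dots> \<le> r0 * Dc i" using r0_props(3)[OF i] Dc_pos[OF i] by (simp add: pos_divide_le_eq)
  also have "\<dots> < t0 * Dc i" using t0_props Dc_pos[OF i] by simp
  finally show "cx i > 0" unfolding cx_def using t0_props by (simp add: field_simps)
  have A: "m * C i + (C i)\<^sup>2 < m * zeta i" using zeta[OF i] m by (simp add: field_simps power2_eq_square)
  have "(C i)\<^sup>2 + m * (C i * 2) < m * (zeta i * 2)" using A zero_le_power2[of "C i"] by (smt (verit) mult.commute mult.left_commute distrib_left)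
  then have "zeta i - (C i + (C i)\<^sup>2 / (2 * m)) > 0" using m by (simp add: field_simps)
  then show "cy i > 0" unfolding cy_def Kc_def by (simp add: field_simps)
qed

lemma fejer:
  assumes kkt: "is_KKT gc gh mu1 mu2 N E xs ys ls"
  shows "Psi xs ys ls k - Psi xs ys ls (Suc k) \<ge>
     cw * (\<Sum>e\<in>E. (norm (edge_diff (Wc (Suc k)) e))\<^sup>2)
     + (\<Sum>i<N. cx i * (norm (Wc k i - Wc (Suc k) i))\<^sup>2)
     + (\<Sum>i<N. cy i * (norm (Wh k i - Wh (Suc k) i))\<^sup>2)"
proof -
  define w where "w = (\<lambda>e. edge_diff (Wc (Suc k)) e)"
  define dx where "dx = (\<lambda>j. Wc k j - Wc (Suc k) j)"
  have tp: "t0 > 0" using t0_props by simp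
  have Y: "2 * rho * (\<Sum>e\<in>E. edge_diff dx e \<bullet> w e) \<ge> - rho * t0 * (\<Sum>e\<in>E. (norm (w e))\<^sup>2) - rho / t0 * (\<Sum>e\<in>E. (norm (edge_diff dx e))\<^sup>2)"
  proof -
    have "(\<Sum>e\<in>E. - t0 * (norm (w e))\<^sup>2 - (norm (edge_diff dx e))\<^sup>2 / t0) \<le> (\<Sum>e\<in>E. 2 * (edge_diff dx e \<bullet> w e))"
      by (rule sum_mono) (rule young2[OF tp])
    then have "- t0 * (\<Sum>e\<in>E. (norm (w e))\<^sup>2) - (\<Sum>e\<in>E. (norm (edge_diff dx e))\<^sup>2) / t0 \<le> 2 * (\<Sum>e\<in>E. edge_diff dx e \<bullet> w e)"
      by (simp add: sum_subtractf sum_distrib_left sum_divide_distrib)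
    from mult_left_mono[OF this, of rho] rho show ?thesis by (simp add: algebra_simps)
  qed
  have ES: "(\<Sum>e\<in>E. (norm (edge_diff dx e))\<^sup>2) \<le> 2 * (\<Sum>i<N. real (degree E i) * (norm (dx i))\<^sup>2)"
    by (rule edge_sum_le[OF edges])
  have ES2: "rho / t0 * (\<Sum>e\<in>E. (norm (edge_diff dx e))\<^sup>2) \<le> (\<Sum>i<N. 2 * rho * real (degree E i) / t0 * (norm (dx i))\<^sup>2)"
  proof -
    have "rho / t0 * (\<Sum>e\<in>E. (norm (edge_diff dx e))\<^sup>2) \<le> rho / t0 * (2 * (\<Sum>i<N. real (degree E i) * (norm (dx i))\<^sup>2))"
      using ES rho tp by (intro mult_left_mono) auto
    also have "\<dots> = (\<Sum>i<N. 2 * rho * real (degree E i) / t0 * (norm (dx i))\<^sup>2)"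
      by (simp add: sum_distrib_left algebra_simps)
    finally show ?thesis .
  qed
  have X: "(\<Sum>i<N. cx i * (norm (dx i))\<^sup>2) = (\<Sum>i<N. Dc i * (norm (dx i))\<^sup>2) - (\<Sum>i<N. 2 * rho * real (degree E i) / t0 * (norm (dx i))\<^sup>2)"
    by (simp add: cx_def left_diff_distrib sum_subtractf)
  have Yy: "(\<Sum>i<N. cy i * (norm (Wh k i - Wh (Suc k) i))\<^sup>2) = (\<Sum>i<N. (zeta i - 2 * Kc i) * (norm (Wh k i - Wh (Suc k) i))\<^sup>2)"
    by (simp add: cy_def)
  have W: "cw * (\<Sum>e\<in>E. (norm (w e))\<^sup>2) = (2 - gamma) * rho * (\<Sum>e\<in>E. (norm (w e))\<^sup>2) - rho * t0 * (\<Sum>e\<in>E. (norm (w e))\<^sup>2)"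
    by (simp add: cw_def algebra_simps)
  show ?thesis using fejer_core[OF kkt, of k] Y ES2 X Yy W unfolding w_def dx_def by linarith
qed

end



lemma sq_to_zero:
  fixes v :: "nat \<Rightarrow> 'a::real_normed_vector"
  assumes c: "c > 0" and le: "\<And>k. c * (norm (v k))\<^sup>2 \<le> d k" and d: "d \<longlonglongrightarrow> 0"
  shows "v \<longlonglongrightarrow> 0"
proof -
  have "(\<lambda>k. (norm (v k))\<^sup>2) \<longlonglongrightarrow> 0"
  proof (rule tendsto_sandwich[of "\<lambda>_. 0" _ _ "\<lambda>k. d k / c"])
    show "\<forall>\<^sub>F k in sequentially. 0 \<le> (norm (v k))\<^sup>2" by simp
    show "\<forall>\<^sub>F k in sequentially. (norm (v k))\<^sup>2 \<le> d k / c"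
      using le c by (simp add: pos_le_divide_eq mult.commute)
    show "(\<lambda>k. d k / c) \<longlonglongrightarrow> 0" using tendsto_divide[OF d tendsto_const[of c]] c by simp
  qed simp
  then have "(\<lambda>k. sqrt ((norm (v k))\<^sup>2)) \<longlonglongrightarrow> sqrt 0" by (rule tendsto_real_sqrt)
  then have "(\<lambda>k. norm (v k)) \<longlonglongrightarrow> 0" by simp
  then show ?thesis by (simp add: tendsto_norm_zero_iff)
qed

lemma common_subseq:
  fixes s :: "'i \<Rightarrow> nat \<Rightarrow> 'a::heine_borel"
  assumes "finite I" "\<forall>j\<in>I. bounded (range (s j))"
  shows "\<exists>r l. strict_mono r \<and> (\<forall>j\<in>I. (s j \<circ> r) \<longlonglongrightarrow> l j)"
  using assms
proof (induction I rule: finite_induct)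
  case empty
  show ?case by (rule exI[of _ id]) (auto simp: strict_mono_def)
next
  case (insert j I)
  have "\<exists>r l. strict_mono r \<and> (\<forall>j\<in>I. (s j \<circ> r) \<longlonglongrightarrow> l j)" using insert.IH insert.prems by (auto simp: o_def)
  then obtain r l where r: "strict_mono r" "\<forall>j\<in>I. (s j \<circ> r) \<longlonglongrightarrow> l j" by blast
  have "bounded (range (s j \<circ> r))"
    using insert.prems by (rule_tac bounded_subset[of "range (s j)"]) auto
  then obtain lj r' where r': "strict_mono r'" "((s j \<circ> r) \<circ> r') \<longlonglongrightarrow> lj"
    using bounded_imp_convergent_subsequence by blast
  show ?case
  proof (intro exI conjI ballI)
    show "strict_mono (r \<circ> r')" using r(1) r'(1) by (simp add: strict_mono_def)
    fix j' assume "j' \<in> insert j I"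
    then show "(s j' \<circ> (r \<circ> r')) \<longlonglongrightarrow> (l(j := lj)) j'"
    proof
      assume "j' = j" then show ?thesis using r'(2) by (simp add: o_assoc)
    next
      assume j': "j' \<in> I"
      then have "j' \<noteq> j" using insert.hyps by auto
      then show ?thesis using LIMSEQ_subseq_LIMSEQ[OF r(2)[rule_format, OF j'] r'(1)] by (simp add: o_assoc)
    qed
  qed
qed

lemma AT_tendsto:
  fixes F :: "nat \<Rightarrow> nat \<times> nat \<Rightarrow> 'a::real_normed_vector"
  assumes "\<And>e. e \<in> E \<Longrightarrow> (\<lambda>j. F j e) \<longlonglongrightarrow> G e"
  shows "(\<lambda>j. AT E (F j) i) \<longlonglongrightarrow> AT E G i"
  unfolding AT_def using assms by (intro tendsto_intros) auto

lemma bounded_from_sq: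
  fixes v :: "nat \<Rightarrow> 'a::real_normed_vector"
  assumes c: "c > 0" and le: "\<And>k. c * (norm (v k - x))\<^sup>2 \<le> B"
  shows "bounded (range v)"
  unfolding bounded_iff
proof (intro exI ballI)
  fix y assume "y \<in> range v"
  then obtain k where y: "y = v k" by auto
  have "(norm (v k - x))\<^sup>2 \<le> B / c" using le[of k] c by (simp add: pos_le_divide_eq mult.commute)
  then have "norm (v k - x) \<le> sqrt (B / c)" by (rule real_le_rsqrt)
  moreover have "norm (v k) \<le> norm x + norm (v k - x)" by (metis norm_triangle_sub add.commute)
  ultimately show "norm y \<le> norm x + sqrt (B / c)" using y by simp
qed

context setting begin

lemma C_nonneg: "i < N \<Longrightarrow> C i \<ge> 0"
proof (rule ccontr)
  assume i: "i < N" and "\<not> C i \<ge> 0"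
  have ne: "(1::real^'n) \<noteq> 0" by (simp add: vec_eq_iff)
  have "norm ((gc i (0, 0), gh i (0, 0)) - (gc i (1, 0), gh i (1, 0))) \<le> C i * norm ((0::real^'n, 0::real^'n) - (1, 0))"
    by (rule lip[OF i])
  moreover have "norm ((0::real^'n, 0::real^'n) - (1, 0)) > 0" using ne by simp
  ultimately have "C i * norm ((0::real^'n, 0::real^'n) - (1, 0)) \<ge> 0" using norm_ge_zero order_trans by blast
  with \<open>norm ((0::real^'n, 0::real^'n) - (1, 0)) > 0\<close> \<open>\<not> C i \<ge> 0\<close> show False
    by (simp add: zero_le_mult_iff)
qed

lemma zeta_pos: "i < N \<Longrightarrow> zeta i > 0"
proof -
  assume i: "i < N"
  have "C i / m * (C i + m) \<ge> 0" using C_nonneg[OF i] m by simp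
  then show ?thesis using zeta[OF i] by linarith
qed

lemma Psi_parts:
  assumes kkt: "is_KKT gc gh mu1 mu2 N E xs ys ls"
  shows "i < N \<Longrightarrow> Dc i * (norm (Wc k i - xs i))\<^sup>2 \<le> Psi xs ys ls k"
    and "i < N \<Longrightarrow> zeta i * (norm (Wh k i - ys i))\<^sup>2 \<le> Psi xs ys ls k"
    and "e \<in> E \<Longrightarrow> (1 / (gamma * rho)) * (norm (lam k e - ls e))\<^sup>2 \<le> Psi xs ys ls k"
    and "0 \<le> Psi xs ys ls k"
proof -
  have gr: "1 / (gamma * rho) > 0" using gamma rho by simp
  have fin: "finite E" by (rule valid_finite[OF edges])
  have s1: "0 \<le> (\<Sum>e\<in>E. (norm (lam k e - ls e))\<^sup>2)" by (simp add: sum_nonneg)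
  have s1d: "0 \<le> (\<Sum>e\<in>E. (norm (lam k e - ls e))\<^sup>2) / (gamma * rho)" using s1 gamma rho by simp
  have s2: "0 \<le> (\<Sum>i<N. Dc i * (norm (Wc k i - xs i))\<^sup>2)"
    using Dc_pos by (intro sum_nonneg) (simp add: less_imp_le)
  have s3: "0 \<le> (\<Sum>i<N. zeta i * (norm (Wh k i - ys i))\<^sup>2)"
    using zeta_pos by (intro sum_nonneg) (simp add: less_imp_le)
  show "0 \<le> Psi xs ys ls k" unfolding Psi_def using s1 s2 s3 gr by simp
  show "i < N \<Longrightarrow> Dc i * (norm (Wc k i - xs i))\<^sup>2 \<le> Psi xs ys ls k"
  proof -
    assume i: "i < N"
    have "Dc i * (norm (Wc k i - xs i))\<^sup>2 \<le> (\<Sum>i<N. Dc i * (norm (Wc k i - xs i))\<^sup>2)"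
      using i Dc_pos by (intro member_le_sum) (auto simp: less_imp_le)
    then show ?thesis unfolding Psi_def using s1d s3 gr by simp
  qed
  show "i < N \<Longrightarrow> zeta i * (norm (Wh k i - ys i))\<^sup>2 \<le> Psi xs ys ls k"
  proof -
    assume i: "i < N"
    have "zeta i * (norm (Wh k i - ys i))\<^sup>2 \<le> (\<Sum>i<N. zeta i * (norm (Wh k i - ys i))\<^sup>2)"
      using i zeta_pos by (intro member_le_sum) (auto simp: less_imp_le)
    then show ?thesis unfolding Psi_def using s1d s2 gr by simp
  qed
  show "e \<in> E \<Longrightarrow> (1 / (gamma * rho)) * (norm (lam k e - ls e))\<^sup>2 \<le> Psi xs ys ls k"
  proof -
    assume e: "e \<in> E"
    have "(norm (lam k e - ls e))\<^sup>2 \<le> (\<Sum>e\<in>E. (norm (lam k e - ls e))\<^sup>2)"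
      using e fin by (intro member_le_sum) auto
    then have "(1 / (gamma * rho)) * (norm (lam k e - ls e))\<^sup>2 \<le> (1 / (gamma * rho)) * (\<Sum>e\<in>E. (norm (lam k e - ls e))\<^sup>2)"
      using gr by (intro mult_left_mono) auto
    then show ?thesis unfolding Psi_def using s2 s3 by simp
  qed
qed

lemma kkt_facts:
  assumes kkt: "is_KKT gc gh mu1 mu2 N E xs ys ls"
  shows "decseq (Psi xs ys ls)"
    and "e \<in> E \<Longrightarrow> (\<lambda>k. edge_diff (Wc k) e) \<longlonglongrightarrow> 0"
    and "i < N \<Longrightarrow> (\<lambda>k. Wc k i - Wc (Suc k) i) \<longlonglongrightarrow> 0"
    and "i < N \<Longrightarrow> (\<lambda>k. Wh k i - Wh (Suc k) i) \<longlonglongrightarrow> 0"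
    and "i < N \<Longrightarrow> bounded (range (\<lambda>k. Wc k i))"
    and "i < N \<Longrightarrow> bounded (range (\<lambda>k. Wh k i))"
    and "e \<in> E \<Longrightarrow> bounded (range (\<lambda>k. lam k e))"
proof -
  let ?P = "Psi xs ys ls"
  define d where "d k = ?P k - ?P (Suc k)" for k
  have t1: "0 \<le> cw * (\<Sum>e\<in>E. (norm (edge_diff (Wc (Suc k)) e))\<^sup>2)" for k
    using consts_pos(1) by (simp add: sum_nonneg)
  have t2: "0 \<le> (\<Sum>i<N. cx i * (norm (Wc k i - Wc (Suc k) i))\<^sup>2)" for k
    using consts_pos(2) by (intro sum_nonneg) (simp add: less_imp_le)
  have t3: "0 \<le> (\<Sum>i<N. cy i * (norm (Wh k i - Wh (Suc k) i))\<^sup>2)" for k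
    using consts_pos(3) by (intro sum_nonneg) (simp add: less_imp_le)
  have F: "cw * (\<Sum>e\<in>E. (norm (edge_diff (Wc (Suc k)) e))\<^sup>2)
     + (\<Sum>i<N. cx i * (norm (Wc k i - Wc (Suc k) i))\<^sup>2)
     + (\<Sum>i<N. cy i * (norm (Wh k i - Wh (Suc k) i))\<^sup>2) \<le> d k" for k
    using fejer[OF kkt, of k] by (simp add: d_def)
  show dec: "decseq ?P"
  proof (rule decseq_SucI)
    fix n
    have "0 \<le> d n" using F[of n] t1[of n] t2[of n] t3[of n] by linarith
    then show "?P (Suc n) \<le> ?P n" by (simp add: d_def)
  qed
  obtain L where "?P \<longlonglongrightarrow> L" using decseq_convergent[OF dec, of 0] Psi_parts(4)[OF kkt] by blast
  then have d0: "d \<longlonglongrightarrow> 0"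
    unfolding d_def using tendsto_diff[OF \<open>?P \<longlonglongrightarrow> L\<close> LIMSEQ_Suc[OF \<open>?P \<longlonglongrightarrow> L\<close>]] by simp
  show "e \<in> E \<Longrightarrow> (\<lambda>k. edge_diff (Wc k) e) \<longlonglongrightarrow> 0"
  proof -
    assume e: "e \<in> E"
    have "(\<lambda>k. edge_diff (Wc (Suc k)) e) \<longlonglongrightarrow> 0"
    proof (rule sq_to_zero[OF consts_pos(1) _ d0])
      fix k
      have "(norm (edge_diff (Wc (Suc k)) e))\<^sup>2 \<le> (\<Sum>e\<in>E. (norm (edge_diff (Wc (Suc k)) e))\<^sup>2)"
        using e valid_finite[OF edges] by (intro member_le_sum) auto
      then have "cw * (norm (edge_diff (Wc (Suc k)) e))\<^sup>2 \<le> cw * (\<Sum>e\<in>E. (norm (edge_diff (Wc (Suc k)) e))\<^sup>2)"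
        using consts_pos(1) by (intro mult_left_mono) auto
      then show "cw * (norm (edge_diff (Wc (Suc k)) e))\<^sup>2 \<le> d k" using F[of k] t2[of k] t3[of k] by linarith
    qed
    then show ?thesis by (rule filterlim_sequentially_Suc[THEN iffD1])
  qed
  show "i < N \<Longrightarrow> (\<lambda>k. Wc k i - Wc (Suc k) i) \<longlonglongrightarrow> 0"
  proof -
    assume i: "i < N"
    show ?thesis
    proof (rule sq_to_zero[OF consts_pos(2)[OF i] _ d0])
      fix k
      have "cx i * (norm (Wc k i - Wc (Suc k) i))\<^sup>2 \<le> (\<Sum>i<N. cx i * (norm (Wc k i - Wc (Suc k) i))\<^sup>2)"
        using i consts_pos(2) by (intro member_le_sum) (auto simp: less_imp_le)
      then show "cx i * (norm (Wc k i - Wc (Suc k) i))\<^sup>2 \<le> d k" using F[of k] t1[of k] t3[of k] by linarith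
    qed
  qed
  show "i < N \<Longrightarrow> (\<lambda>k. Wh k i - Wh (Suc k) i) \<longlonglongrightarrow> 0"
  proof -
    assume i: "i < N"
    show ?thesis
    proof (rule sq_to_zero[OF consts_pos(3)[OF i] _ d0])
      fix k
      have "cy i * (norm (Wh k i - Wh (Suc k) i))\<^sup>2 \<le> (\<Sum>i<N. cy i * (norm (Wh k i - Wh (Suc k) i))\<^sup>2)"
        using i consts_pos(3) by (intro member_le_sum) (auto simp: less_imp_le)
      then show "cy i * (norm (Wh k i - Wh (Suc k) i))\<^sup>2 \<le> d k" using F[of k] t1[of k] t2[of k] by linarith
    qed
  qed
  have P0: "?P k \<le> ?P 0" for k using decseqD[OF dec, of 0 k] by simp
  show "i < N \<Longrightarrow> bounded (range (\<lambda>k. Wc k i))"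
    using Psi_parts(1)[OF kkt] P0 Dc_pos by (intro bounded_from_sq[of "Dc i" _ "xs i" "?P 0"]) (auto intro: order_trans)
  show "i < N \<Longrightarrow> bounded (range (\<lambda>k. Wh k i))"
    using Psi_parts(2)[OF kkt] P0 zeta_pos by (intro bounded_from_sq[of "zeta i" _ "ys i" "?P 0"]) (auto intro: order_trans)
  show "e \<in> E \<Longrightarrow> bounded (range (\<lambda>k. lam k e))"
  proof -
    assume e: "e \<in> E"
    show ?thesis
    proof (rule bounded_from_sq[of "1 / (gamma * rho)" _ "ls e" "?P 0"])
      show "1 / (gamma * rho) > 0" using gamma rho by simp
      show "1 / (gamma * rho) * (norm (lam k e - ls e))\<^sup>2 \<le> ?P 0" for k
        using Psi_parts(3)[OF kkt e, of k] P0[of k] by linarith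
    qed
  qed
qed

lemma g_tendsto:
  assumes i: "i < N" and Z: "Z \<longlonglongrightarrow> z"
  shows "(\<lambda>j. gc i (Z j)) \<longlonglongrightarrow> gc i z" and "(\<lambda>j. gh i (Z j)) \<longlonglongrightarrow> gh i z"
proof -
  have bd: "(\<lambda>j. C i * norm (Z j - z)) \<longlonglongrightarrow> 0"
    using tendsto_mult_left[OF tendsto_norm[OF LIM_zero[OF Z]], of "C i"] by simp
  have n: "norm ((gc i a, gh i a) - (gc i b, gh i b)) \<le> C i * norm (a - b)" for a b using lip[OF i] .
  have "(\<lambda>j. gc i (Z j) - gc i z) \<longlonglongrightarrow> 0"
  proof (rule Lim_null_comparison[OF _ bd], rule always_eventually, rule allI)
    fix j
    have "norm (gc i (Z j) - gc i z) \<le> norm ((gc i (Z j), gh i (Z j)) - (gc i z, gh i z))"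
      using norm_fst_le[of "gc i (Z j) - gc i z" "gh i (Z j) - gh i z"] by simp
    then show "norm (gc i (Z j) - gc i z) \<le> C i * norm (Z j - z)" using n[of "Z j" z] by linarith
  qed
  then show "(\<lambda>j. gc i (Z j)) \<longlonglongrightarrow> gc i z" by (rule LIM_zero_cancel)
  have "(\<lambda>j. gh i (Z j) - gh i z) \<longlonglongrightarrow> 0"
  proof (rule Lim_null_comparison[OF _ bd], rule always_eventually, rule allI)
    fix j
    have "norm (gh i (Z j) - gh i z) \<le> norm ((gc i (Z j), gh i (Z j)) - (gc i z, gh i z))"
      using norm_snd_le[of "gh i (Z j) - gh i z" "gc i (Z j) - gc i z"] by simp
    then show "norm (gh i (Z j) - gh i z) \<le> C i * norm (Z j - z)" using n[of "Z j" z] by linarith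
  qed
  then show "(\<lambda>j. gh i (Z j)) \<longlonglongrightarrow> gh i z" by (rule LIM_zero_cancel)
qed

lemma main:
  assumes KKT_exists: "\<exists>Wc' Wh' lam'. is_KKT gc gh mu1 mu2 N E Wc' Wh' lam'"
  shows "\<exists>Wcs Whs lams. is_KKT gc gh mu1 mu2 N E Wcs Whs lams \<and>
           (\<forall>i<N. (\<lambda>k. Wc k i) \<longlonglongrightarrow> Wcs i) \<and>
           (\<forall>i<N. (\<lambda>k. Wh k i) \<longlonglongrightarrow> Whs i) \<and>
           (\<forall>e\<in>E. (\<lambda>k. lam k e) \<longlonglongrightarrow> lams e)"
proof -
  obtain xs ys ls where kkt: "is_KKT gc gh mu1 mu2 N E xs ys ls" using KKT_exists by blast
  define s :: "nat + nat + (nat \<times> nat) \<Rightarrow> nat \<Rightarrow> real^'n" where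
    "s = (\<lambda>j k. case j of Inl i \<Rightarrow> Wc k i | Inr (Inl i) \<Rightarrow> Wh k i | Inr (Inr e) \<Rightarrow> lam k e)"
  define I where "I = Inl ` {..<N} \<union> Inr ` Inl ` {..<N} \<union> Inr ` Inr ` E"
  have finI: "finite I" unfolding I_def using valid_finite[OF edges] by simp
  have bI: "\<forall>j\<in>I. bounded (range (s j))"
  proof
    fix j assume "j \<in> I"
    then consider (a) i where "i < N" "j = Inl i" | (b) i where "i < N" "j = Inr (Inl i)"
      | (c) e where "e \<in> E" "j = Inr (Inr e)" unfolding I_def by blast
    then show "bounded (range (s j))"
    proof cases
      case a then show ?thesis using kkt_facts(5)[OF kkt] by (simp add: s_def)
    next
      case b then show ?thesis using kkt_facts(6)[OF kkt] by (simp add: s_def)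
    next
      case c then show ?thesis using kkt_facts(7)[OF kkt] by (simp add: s_def)
    qed
  qed
  obtain r l where r: "strict_mono r" and rl: "\<forall>j\<in>I. (s j \<circ> r) \<longlonglongrightarrow> l j"
    using common_subseq[OF finI bI] by blast
  define xb where "xb i = l (Inl i)" for i
  define yb where "yb i = l (Inr (Inl i))" for i
  define lb where "lb e = l (Inr (Inr e))" for e
  have cx: "(\<lambda>j. Wc (r j) i) \<longlonglongrightarrow> xb i" if "i < N" for i
    using rl[rule_format, of "Inl i"] that unfolding I_def s_def xb_def by (simp add: o_def)
  have cy: "(\<lambda>j. Wh (r j) i) \<longlonglongrightarrow> yb i" if "i < N" for i
    using rl[rule_format, of "Inr (Inl i)"] that unfolding I_def s_def yb_def by (simp add: o_def)
  have cl: "(\<lambda>j. lam (r j) e) \<longlonglongrightarrow> lb e" if "e \<in> E" for e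
    using rl[rule_format, of "Inr (Inr e)"] that unfolding I_def s_def lb_def by (simp add: o_def)
  have cx1: "(\<lambda>j. Wc (Suc (r j)) i) \<longlonglongrightarrow> xb i" if i: "i < N" for i
  proof -
    have "(\<lambda>j. Wc (r j) i - Wc (Suc (r j)) i) \<longlonglongrightarrow> 0"
      using LIMSEQ_subseq_LIMSEQ[OF kkt_facts(3)[OF kkt i] r] by (simp add: o_def)
    from tendsto_diff[OF cx[OF i] this] show ?thesis by simp
  qed
  have cy1: "(\<lambda>j. Wh (Suc (r j)) i) \<longlonglongrightarrow> yb i" if i: "i < N" for i
  proof -
    have "(\<lambda>j. Wh (r j) i - Wh (Suc (r j)) i) \<longlonglongrightarrow> 0"
      using LIMSEQ_subseq_LIMSEQ[OF kkt_facts(4)[OF kkt i] r] by (simp add: o_def)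
    from tendsto_diff[OF cy[OF i] this] show ?thesis by simp
  qed
  have kE: "edge_diff xb e = 0" if e: "e \<in> E" for e
  proof -
    have lt: "fst e < N" "snd e < N" using valid_lt[OF edges e] by auto
    have "(\<lambda>j. edge_diff (Wc (r j)) e) \<longlonglongrightarrow> edge_diff xb e"
      unfolding edge_diff_def using cx[OF lt(1)] cx[OF lt(2)] by (rule tendsto_diff)
    moreover have "(\<lambda>j. edge_diff (Wc (r j)) e) \<longlonglongrightarrow> 0"
      using LIMSEQ_subseq_LIMSEQ[OF kkt_facts(2)[OF kkt e] r] by (simp add: o_def)
    ultimately show ?thesis by (rule LIMSEQ_unique)
  qed
  have kx: "AT E lb i = gc i (xb i, yb i) + mu1 *\<^sub>R xb i" if i: "i < N" for i
  proof -
    have upd: "(\<lambda>j. ((Wc (r j))(i := Wc (Suc (r j)) i)) p) \<longlonglongrightarrow> xb p" if p: "p < N" for p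
      using cx[OF p] cx1[OF i] by (cases "p = i") auto
    have ATu: "(\<lambda>j. AT E (edge_diff ((Wc (r j))(i := Wc (Suc (r j)) i))) i) \<longlonglongrightarrow> AT E (edge_diff xb) i"
    proof (rule AT_tendsto)
      fix e assume e: "e \<in> E"
      have lt: "fst e < N" "snd e < N" using valid_lt[OF edges e] by auto
      show "(\<lambda>j. edge_diff ((Wc (r j))(i := Wc (Suc (r j)) i)) e) \<longlonglongrightarrow> edge_diff xb e"
        unfolding edge_diff_def using upd[OF lt(1)] upd[OF lt(2)] by (rule tendsto_diff)
    qed
    have AT0: "AT E (edge_diff xb) i = 0" by (rule AT_zero) (rule kE)
    have gl: "(\<lambda>j. gc i (Wc (Suc (r j)) i, Wh (r j) i)) \<longlonglongrightarrow> gc i (xb i, yb i)"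
      by (rule g_tendsto(1)[OF i]) (intro tendsto_Pair cx1[OF i] cy[OF i])
    have "(\<lambda>j. gc i (Wc (Suc (r j)) i, Wh (r j) i) + mu1 *\<^sub>R Wc (Suc (r j)) i - AT E (lam (r j)) i
       + rho *\<^sub>R AT E (edge_diff ((Wc (r j))(i := Wc (Suc (r j)) i))) i + tau i *\<^sub>R (Wc (Suc (r j)) i - Wc (r j) i))
       \<longlonglongrightarrow> gc i (xb i, yb i) + mu1 *\<^sub>R xb i - AT E lb i + rho *\<^sub>R AT E (edge_diff xb) i + tau i *\<^sub>R (xb i - xb i)"
    proof -
      have ATl: "(\<lambda>j. AT E (lam (r j)) i) \<longlonglongrightarrow> AT E lb i" by (rule AT_tendsto) (rule cl)
      show ?thesis
        by (rule tendsto_add[OF tendsto_add[OF tendsto_diff[OF tendsto_add[OF gl tendsto_scaleR[OF tendsto_const cx1[OF i]]] ATl]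
            tendsto_scaleR[OF tendsto_const ATu]] tendsto_scaleR[OF tendsto_const tendsto_diff[OF cx1[OF i] cx[OF i]]]])
    qed
    moreover have "(\<lambda>j. gc i (Wc (Suc (r j)) i, Wh (r j) i) + mu1 *\<^sub>R Wc (Suc (r j)) i - AT E (lam (r j)) i
       + rho *\<^sub>R AT E (edge_diff ((Wc (r j))(i := Wc (Suc (r j)) i))) i + tau i *\<^sub>R (Wc (Suc (r j)) i - Wc (r j) i)) = (\<lambda>j. 0)"
      using OCx[OF i] by simp
    ultimately have "(\<lambda>j. 0) \<longlonglongrightarrow> gc i (xb i, yb i) + mu1 *\<^sub>R xb i - AT E lb i + rho *\<^sub>R AT E (edge_diff xb) i + tau i *\<^sub>R (xb i - xb i)"
      by simp
    from LIMSEQ_unique[OF this tendsto_const]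
    have "gc i (xb i, yb i) + mu1 *\<^sub>R xb i - AT E lb i + rho *\<^sub>R AT E (edge_diff xb) i + tau i *\<^sub>R (xb i - xb i) = 0" .
    then show ?thesis using AT0 by (simp add: algebra_simps)
  qed
  have ky: "gh i (xb i, yb i) + mu2 *\<^sub>R yb i = 0" if i: "i < N" for i
  proof -
    have gl: "(\<lambda>j. gh i (Wc (Suc (r j)) i, Wh (Suc (r j)) i)) \<longlonglongrightarrow> gh i (xb i, yb i)"
      by (rule g_tendsto(2)[OF i]) (intro tendsto_Pair cx1[OF i] cy1[OF i])
    have "(\<lambda>j. gh i (Wc (Suc (r j)) i, Wh (Suc (r j)) i) + mu2 *\<^sub>R Wh (Suc (r j)) i + zeta i *\<^sub>R (Wh (Suc (r j)) i - Wh (r j) i))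
       \<longlonglongrightarrow> gh i (xb i, yb i) + mu2 *\<^sub>R yb i + zeta i *\<^sub>R (yb i - yb i)"
      by (rule tendsto_add[OF tendsto_add[OF gl tendsto_scaleR[OF tendsto_const cy1[OF i]]]
            tendsto_scaleR[OF tendsto_const tendsto_diff[OF cy1[OF i] cy[OF i]]]])
    moreover have "(\<lambda>j. gh i (Wc (Suc (r j)) i, Wh (Suc (r j)) i) + mu2 *\<^sub>R Wh (Suc (r j)) i + zeta i *\<^sub>R (Wh (Suc (r j)) i - Wh (r j) i)) = (\<lambda>j. 0)"
      using OCy[OF i] by simp
    ultimately have "(\<lambda>j. 0) \<longlonglongrightarrow> gh i (xb i, yb i) + mu2 *\<^sub>R yb i + zeta i *\<^sub>R (yb i - yb i)"
      by simp
    from LIMSEQ_unique[OF this tendsto_const]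
    have "gh i (xb i, yb i) + mu2 *\<^sub>R yb i + zeta i *\<^sub>R (yb i - yb i) = 0" .
    then show ?thesis by simp
  qed
  have kb: "is_KKT gc gh mu1 mu2 N E xb yb lb"
    unfolding is_KKT_def using kE kx ky by auto
  let ?P = "Psi xb yb lb"
  have Pr: "(\<lambda>j. ?P (r j)) \<longlonglongrightarrow> 0"
  proof -
    have "(\<lambda>j. ?P (r j)) \<longlonglongrightarrow> (1 / (gamma * rho)) * (\<Sum>e\<in>E. (norm (lb e - lb e))\<^sup>2)
      + (\<Sum>i<N. Dc i * (norm (xb i - xb i))\<^sup>2) + (\<Sum>i<N. zeta i * (norm (yb i - yb i))\<^sup>2)"
          proof -
      have A1: "(\<lambda>j. \<Sum>e\<in>E. (norm (lam (r j) e - lb e))\<^sup>2) \<longlonglongrightarrow> (\<Sum>e\<in>E. (norm (lb e - lb e))\<^sup>2)"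
        by (rule tendsto_sum, rule tendsto_power, rule tendsto_norm, rule tendsto_diff, erule cl, rule tendsto_const)
      have A2: "(\<lambda>j. \<Sum>i<N. Dc i * (norm (Wc (r j) i - xb i))\<^sup>2) \<longlonglongrightarrow> (\<Sum>i<N. Dc i * (norm (xb i - xb i))\<^sup>2)"
        by (rule tendsto_sum, rule tendsto_mult_left, rule tendsto_power, rule tendsto_norm, rule tendsto_diff, rule cx, simp, rule tendsto_const)
      have A3: "(\<lambda>j. \<Sum>i<N. zeta i * (norm (Wh (r j) i - yb i))\<^sup>2) \<longlonglongrightarrow> (\<Sum>i<N. zeta i * (norm (yb i - yb i))\<^sup>2)"
        by (rule tendsto_sum, rule tendsto_mult_left, rule tendsto_power, rule tendsto_norm, rule tendsto_diff, rule cy, simp, rule tendsto_const)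
      show ?thesis unfolding Psi_def by (rule tendsto_add[OF tendsto_add[OF tendsto_mult_left[OF A1] A2] A3])
    qed
    then show ?thesis by simp
  qed
  have decb: "decseq ?P" by (rule kkt_facts(1)[OF kb])
  obtain L where PL: "?P \<longlonglongrightarrow> L" using decseq_convergent[OF decb, of 0] Psi_parts(4)[OF kb] by blast
  have "(\<lambda>j. ?P (r j)) \<longlonglongrightarrow> L" using LIMSEQ_subseq_LIMSEQ[OF PL r] by (simp add: o_def)
  from LIMSEQ_unique[OF this Pr] have "L = 0" .
  with PL have P0: "?P \<longlonglongrightarrow> 0" by simp
  show ?thesis
  proof (intro exI conjI allI impI ballI)
    show "is_KKT gc gh mu1 mu2 N E xb yb lb" by (rule kb)
    fix i assume i: "i < N"
    have "(\<lambda>k. Wc k i - xb i) \<longlonglongrightarrow> 0"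
      by (rule sq_to_zero[OF Dc_pos[OF i] _ P0]) (rule Psi_parts(1)[OF kb i])
    then show "(\<lambda>k. Wc k i) \<longlonglongrightarrow> xb i" by (rule LIM_zero_cancel)
    have "(\<lambda>k. Wh k i - yb i) \<longlonglongrightarrow> 0"
      by (rule sq_to_zero[OF zeta_pos[OF i] _ P0]) (rule Psi_parts(2)[OF kb i])
    then show "(\<lambda>k. Wh k i) \<longlonglongrightarrow> yb i" by (rule LIM_zero_cancel)
  next
    fix e assume e: "e \<in> E"
    have gr: "1 / (gamma * rho) > 0" using gamma rho by simp
    have "(\<lambda>k. lam k e - lb e) \<longlonglongrightarrow> 0"
      by (rule sq_to_zero[OF gr _ P0]) (rule Psi_parts(3)[OF kb e])
    then show "(\<lambda>k. lam k e) \<longlonglongrightarrow> lb e" by (rule LIM_zero_cancel)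
  qed
qed

end


theorem proposition1:
  fixes N :: nat and E :: "(nat \<times> nat) set"
    and f :: "nat \<Rightarrow> ((real^'n) \<times> (real^'n)) \<Rightarrow> real"
    and gc gh :: "nat \<Rightarrow> ((real^'n) \<times> (real^'n)) \<Rightarrow> real^'n"
    and C tau zeta :: "nat \<Rightarrow> real"
    and mu1 mu2 m rho gamma :: real
    and Wc Wh :: "nat \<Rightarrow> nat \<Rightarrow> real^'n"
    and lam :: "nat \<Rightarrow> nat \<times> nat \<Rightarrow> real^'n"
  assumes N2: "N \<ge> 2"
    and edges: "valid_edges N E"
    and conn: "graph_connected N E"
    and grad: "\<And>i z. i < N \<Longrightarrow>
        (f i has_derivative (\<lambda>(a, b). gc i z \<bullet> a + gh i z \<bullet> b)) (at z)"
    and cvx: "\<And>i. i < N \<Longrightarrow> convex_on UNIV (f i)"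
    and lip: "\<And>i z z'. i < N \<Longrightarrow>
        norm ((gc i z, gh i z) - (gc i z', gh i z')) \<le> C i * norm (z - z')"
    and mu1: "mu1 \<ge> 0" and mu2: "mu2 > 0"
    and m: "0 < m" "m \<le> mu2"
    and rho: "rho > 0"
    and gamma: "0 < gamma" "gamma < 2"
    and KKT_exists: "\<exists>Wc' Wh' lam'. is_KKT gc gh mu1 mu2 N E Wc' Wh' lam'"
    and tau: "\<And>i. i < N \<Longrightarrow> tau i > rho * (real N / (2 - gamma) - 1) * real (degree E i)"
    and zeta: "\<And>i. i < N \<Longrightarrow> zeta i > C i / m * (C i + m)"
    and step_i: "\<And>k i w. i < N \<Longrightarrow>
        lagr f mu1 mu2 N E rho ((Wc k)(i := Wc (Suc k) i)) (Wh k) (lam k)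
          + tau i / 2 * (norm (Wc (Suc k) i - Wc k i))\<^sup>2
        \<le> lagr f mu1 mu2 N E rho ((Wc k)(i := w)) (Wh k) (lam k)
          + tau i / 2 * (norm (w - Wc k i))\<^sup>2"
    and step_ii: "\<And>k e. e \<in> E \<Longrightarrow>
        lam (Suc k) e = lam k e - (gamma * rho) *\<^sub>R edge_diff (Wc (Suc k)) e"
    and step_iii: "\<And>k i w. i < N \<Longrightarrow>
        Fi f mu1 mu2 i (Wc (Suc k) i) (Wh (Suc k) i)
          + zeta i / 2 * (norm (Wh (Suc k) i - Wh k i))\<^sup>2
        \<le> Fi f mu1 mu2 i (Wc (Suc k) i) w + zeta i / 2 * (norm (w - Wh k i))\<^sup>2"
  shows "\<exists>Wcs Whs lams. is_KKT gc gh mu1 mu2 N E Wcs Whs lams \<and>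
           (\<forall>i<N. (\<lambda>k. Wc k i) \<longlonglongrightarrow> Wcs i) \<and>
           (\<forall>i<N. (\<lambda>k. Wh k i) \<longlonglongrightarrow> Whs i) \<and>
           (\<forall>e\<in>E. (\<lambda>k. lam k e) \<longlonglongrightarrow> lams e)"
proof -
  interpret setting N E f gc gh C tau zeta mu1 mu2 m rho gamma Wc Wh lam
  proof (unfold_locales)
  qed (fact N2 edges grad cvx lip mu1 mu2 m rho gamma tau zeta step_i step_ii step_iii)+
  show ?thesis by (rule main[OF KKT_exists])
qed

end
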